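(* Let $n\ge 4$, $a>1$, and $f_a(z)=\frac{a}{n+1}z^{n+1}-\frac1n z^{-n}+\frac{1}{n+1}\overline{z}^{\,n+1}-\frac{a}{n}\overline{z}^{\,-n}-1$ on $\mathbb{C}\setminus\{0\}$. Let $\Gamma$ be the unit circle and suppose $f_a$ has no zeros on $\Gamma$. Let $W_{f_a,\Gamma}=\frac{1}{2\pi}\Delta_\Gamma\arg f_a(z)$ be the winding number of $f_a(\Gamma)$ about the origin ($\Gamma$ traversed counterclockwise). Then the total number $T_a$ of zeros of $f_a$ in $\mathbb{C}\setminus\{0\}$ is $$T_a=2\big(n-W_{f_a,\Gamma}\big)+1.$$
   Context: $f_a$ is a complex-valued harmonic function with a single pole at $0$; its critical curve is the unit circle, with $f_a$ sense-reversing inside and sense-preserving outside. *)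

theory Defs
  imports "HOL-Complex_Analysis.Complex_Analysis"
begin

definition f_a :: "nat \<Rightarrow> real \<Rightarrow> complex \<Rightarrow> complex" where
  "f_a n a z =
     complex_of_real a / of_nat (n + 1) * z ^ (n + 1)
   - 1 / of_nat n * inverse (z ^ n)
   + 1 / of_nat (n + 1) * cnj z ^ (n + 1)
   - complex_of_real a / of_nat n * inverse (cnj z ^ n)
   - 1"

end

theory Submission
  imports Defs
begin

lemma winding_branch:
  assumes p: "path p" and U: "open U" "0 \<notin> U" "path_image p \<subseteq> U"
    and F: "\<And>w. w \<in> U \<Longrightarrow> (F has_field_derivative inverse w) (at w)"
  shows "winding_number p 0 = (F (pathfinish p) - F (pathstart p)) / (2 * of_real pi * \<i>)"
proof -
  have z: "0 \<notin> path_image p" using U by blast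
  have "compact (path_image p)" using p by (simp add: compact_path_image)
  then obtain e where e: "e > 0" "(\<Union>x\<in>path_image p. ball x e) \<subseteq> U"
    using compact_subset_open_imp_ball_epsilon_subset[of "path_image p" U] U by blast
  obtain q where q: "winding_number_prop p 0 e q (winding_number p 0)"
    using winding_number[OF p z e(1)] by blast
  have qv: "valid_path q" and qs: "pathstart q = pathstart p" and qf: "pathfinish q = pathfinish p"
    and qc: "contour_integral q (\<lambda>w. 1/(w - 0)) = 2 * pi * \<i> * winding_number p 0"
    and qn: "\<forall>t\<in>{0..1}. norm (p t - q t) < e"
    using q unfolding winding_number_prop_def by auto
  have qU: "path_image q \<subseteq> U"
  proof
    fix w assume "w \<in> path_image q"
    then obtain t where t: "t \<in> {0..1}" "w = q t" unfolding path_image_def by auto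
    have "p t \<in> path_image p" using t unfolding path_image_def by auto
    moreover have "w \<in> ball (p t) e" using qn t by (auto simp: dist_norm)
    ultimately show "w \<in> U" using e by blast
  qed
  have "((\<lambda>w. inverse w) has_contour_integral (F (pathfinish q) - F (pathstart q))) q"
    apply (rule contour_integral_primitive[of U])
      apply (rule has_field_derivative_at_within, erule F)
    using qv qU by auto
  then have "contour_integral q (\<lambda>w. 1/(w - 0)) = F (pathfinish p) - F (pathstart p)"
    using qs qf by (simp add: contour_integral_unique inverse_eq_divide)
  with qc show ?thesis by (simp add: field_simps)
qed

lemma open_U_up: "open {w::complex. -\<i>*w \<notin> \<real>\<^sub>\<le>\<^sub>0}"
proof -
  have "closed ((\<lambda>w. -\<i>*w) -` \<real>\<^sub>\<le>\<^sub>0)"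
    by (intro continuous_closed_vimage closed_nonpos_Reals_complex) (auto intro!: continuous_intros)
  then show ?thesis by (simp add: open_closed vimage_def Compl_eq set_diff_eq)
qed

lemma Im_Ln_mi_real:
  fixes x :: real assumes "x \<noteq> 0"
  shows "Im (Ln (-\<i> * of_real x)) = (if x < 0 then pi/2 else - pi/2)"
  using assms Im_Ln_eq_pi_half[of "-\<i> * of_real x"] by auto

lemma winding_upper:
  assumes p: "path p" and im: "path_image p \<subseteq> {w. Im w \<ge> 0} - {0}"
    and s: "Im (pathstart p) = 0" and f: "Im (pathfinish p) = 0"
  shows "Re (winding_number p 0) =
    ((if Re (pathfinish p) < 0 then 1 else 0) - (if Re (pathstart p) < 0 then 1 else 0)) / 2"
proof -
  let ?U = "{w::complex. -\<i>*w \<notin> \<real>\<^sub>\<le>\<^sub>0}"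
  have sub: "path_image p \<subseteq> ?U"
  proof
    fix w assume "w \<in> path_image p"
    with im have w: "Im w \<ge> 0" "w \<noteq> 0" by auto
    have "-\<i>*w \<notin> \<real>\<^sub>\<le>\<^sub>0"
    proof
      assume "-\<i>*w \<in> \<real>\<^sub>\<le>\<^sub>0"
      then have "Re w = 0" "Im w \<le> 0" by (auto simp: complex_nonpos_Reals_iff)
      with w show False by (simp add: complex_eq_iff)
    qed
    then show "w \<in> ?U" by simp
  qed
  have U0: "0 \<notin> ?U" by auto
  have F: "((\<lambda>w. Ln (-\<i>*w)) has_field_derivative inverse w) (at w)" if "w \<in> ?U" for w
  proof -
    have "w \<noteq> 0" using that by auto
    have "((\<lambda>w. Ln (-\<i>*w)) has_field_derivative inverse (-\<i>*w) * (-\<i>)) (at w)"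
      using that by (auto intro!: derivative_eq_intros)
    then show ?thesis using \<open>w \<noteq> 0\<close> by (simp add: field_simps)
  qed
  have W: "winding_number p 0 = (Ln (-\<i> * pathfinish p) - Ln (-\<i> * pathstart p)) / (2 * of_real pi * \<i>)"
    by (rule winding_branch[OF p open_U_up U0 sub F])
  have ps: "pathstart p \<noteq> 0" "pathfinish p \<noteq> 0"
    using im pathstart_in_path_image pathfinish_in_path_image by blast+
  have es: "pathstart p = of_real (Re (pathstart p))" "pathfinish p = of_real (Re (pathfinish p))"
    using s f by (simp_all add: complex_eq_iff)
  have nz: "Re (pathstart p) \<noteq> 0" "Re (pathfinish p) \<noteq> 0"
    using ps s f by (auto simp: complex_eq_iff)
  have "Re (winding_number p 0) = (Im (Ln (-\<i> * pathfinish p)) - Im (Ln (-\<i> * pathstart p))) / (2*pi)"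
    unfolding W by (simp add: Re_divide field_simps power2_eq_square)
  also have "\<dots> = ((if Re (pathfinish p) < 0 then 1 else 0) - (if Re (pathstart p) < 0 then 1 else 0)) / 2"
  proof -
    have a: "Im (Ln (-\<i> * pathfinish p)) = (if Re (pathfinish p) < 0 then pi/2 else - pi/2)"
      using Im_Ln_mi_real[OF nz(2)] es(2) by metis
    have b: "Im (Ln (-\<i> * pathstart p)) = (if Re (pathstart p) < 0 then pi/2 else - pi/2)"
      using Im_Ln_mi_real[OF nz(1)] es(1) by metis
    show ?thesis unfolding a b by (auto simp: field_simps)
  qed
  finally show ?thesis .
qed

lemma winding_lower:
  assumes p: "path p" and im: "path_image p \<subseteq> {w. Im w \<le> 0} - {0}"
    and s: "Im (pathstart p) = 0" and f: "Im (pathfinish p) = 0"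
  shows "Re (winding_number p 0) =
    - ((if Re (pathfinish p) < 0 then 1 else 0) - (if Re (pathstart p) < 0 then 1 else 0)) / 2"
proof -
  have p': "path (cnj \<circ> p)" using p by (simp add: path_def continuous_on_cnj continuous_on_compose)
  have im': "path_image (cnj \<circ> p) \<subseteq> {w. Im w \<ge> 0} - {0}"
    using im by (auto simp: path_image_def)
  have z: "0 \<notin> path_image p" using im by auto
  have "Re (winding_number (cnj \<circ> p) 0) =
    ((if Re (pathfinish p) < 0 then 1 else 0) - (if Re (pathstart p) < 0 then 1 else 0)) / 2"
    using winding_upper[OF p' im'] s f by (simp add: pathstart_def pathfinish_def)
  moreover have "winding_number (cnj \<circ> p) 0 = - cnj (winding_number p 0)"
    using winding_number_cnj[OF p z] by simp
  ultimately show ?thesis by simp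
qed

lemma winding_sum:
  fixes \<gamma> :: "real \<Rightarrow> complex" and s :: "nat \<Rightarrow> real"
  assumes p: "path \<gamma>" "0 \<notin> path_image \<gamma>" and s0: "s 0 = 0" and sN: "s N \<le> 1"
    and sinc: "\<And>j. j < N \<Longrightarrow> s j < s (Suc j)"
    and sim: "\<And>j. j \<le> N \<Longrightarrow> Im (\<gamma> (s j)) = 0"
    and sgn: "\<And>j t. j < N \<Longrightarrow> s j < t \<Longrightarrow> t < s (Suc j) \<Longrightarrow> (-1)^(j+1) * Im (\<gamma> t) > 0"
  shows "Re (winding_number (subpath 0 (s N) \<gamma>) 0) =
     (\<Sum>j<N. (-1)^(j+1) * ((if Re (\<gamma> (s (Suc j))) < 0 then 1 else 0) - (if Re (\<gamma> (s j)) < 0 then 1 else 0))) / 2"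
proof -
  define e where "e = (\<lambda>j. if Re (\<gamma> (s j)) < 0 then 1 else 0 :: real)"
  have smono: "s j \<le> s k" if "j \<le> k" "k \<le> N" for j k
    using that
  proof (induction k)
    case 0 then show ?case by simp
  next
    case (Suc k)
    show ?case
    proof (cases "j = Suc k")
      case True then show ?thesis by simp
    next
      case False
      then show ?thesis using Suc sinc[of k] by force
    qed
  qed
  have srange: "s j \<in> {0..1}" if "j \<le> N" for j
    using smono[of 0 j] smono[of j N] that s0 sN by auto
  have main: "Re (winding_number (subpath 0 (s m) \<gamma>) 0) = (\<Sum>j<m. (-1)^(j+1) * (e (Suc j) - e j)) / 2"
    if "m \<le> N" for m
    using that
  proof (induction m)
    case 0
    have "0 \<noteq> \<gamma> 0" using p(2) pathstart_in_path_image[of \<gamma>] unfolding pathstart_def by auto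
    then show ?case using s0 by (simp add: winding_number_subpath_trivial)
  next
    case (Suc m)
    then have m: "m < N" by simp
    have comb: "winding_number (subpath 0 (s m) \<gamma>) 0 + winding_number (subpath (s m) (s (Suc m)) \<gamma>) 0
        = winding_number (subpath 0 (s (Suc m)) \<gamma>) 0"
      by (rule winding_number_subpath_combine[OF p]) (use srange m in auto)
    let ?q = "subpath (s m) (s (Suc m)) \<gamma>"
    have sm: "s m < s (Suc m)" using sinc m by simp
    have q: "path ?q" using p srange m by simp
    have qimg: "path_image ?q = \<gamma> ` {s m..s (Suc m)}"
      using sm by (simp add: path_image_subpath)
    have qs: "pathstart ?q = \<gamma> (s m)" and qf: "pathfinish ?q = \<gamma> (s (Suc m))" by simp_all
    have nz: "\<gamma> t \<noteq> 0" if "t \<in> {s m..s (Suc m)}" for t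
    proof -
      have "t \<in> {0..1}" using that srange[of m] srange[of "Suc m"] m by auto
      then show ?thesis using p(2) unfolding path_image_def by force
    qed
    have arc: "Re (winding_number ?q 0) = (-1)^(m+1) * (e (Suc m) - e m) / 2"
    proof (cases "even m")
      case True
      have "path_image ?q \<subseteq> {w. Im w \<le> 0} - {0}"
      proof
        fix w assume "w \<in> path_image ?q"
        then obtain t where t: "t \<in> {s m..s (Suc m)}" "w = \<gamma> t" using qimg by auto
        have "Im (\<gamma> t) \<le> 0"
        proof (cases "t = s m \<or> t = s (Suc m)")
          case True then show ?thesis using sim[of m] sim[of "Suc m"] m by auto
        next
          case False
          then have "s m < t" "t < s (Suc m)" using t by auto
          then show ?thesis using sgn[OF m] \<open>even m\<close> by fastforce
        qed
        then show "w \<in> {w. Im w \<le> 0} - {0}" using nz t by auto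
      qed
      from winding_lower[OF q this] show ?thesis
        using sim[of m] sim[of "Suc m"] m True by (simp add: e_def)
    next
      case False
      have "path_image ?q \<subseteq> {w. Im w \<ge> 0} - {0}"
      proof
        fix w assume "w \<in> path_image ?q"
        then obtain t where t: "t \<in> {s m..s (Suc m)}" "w = \<gamma> t" using qimg by auto
        have "Im (\<gamma> t) \<ge> 0"
        proof (cases "t = s m \<or> t = s (Suc m)")
          case True then show ?thesis using sim[of m] sim[of "Suc m"] m by auto
        next
          case F2: False
          then have "s m < t" "t < s (Suc m)" using t by auto
          then show ?thesis using sgn[OF m] \<open>\<not> even m\<close> by fastforce
        qed
        then show "w \<in> {w. Im w \<ge> 0} - {0}" using nz t by auto
      qed
      from winding_upper[OF q this] show ?thesis
        using sim[of m] sim[of "Suc m"] m False by (simp add: e_def)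
    qed
    have "Re (winding_number (subpath 0 (s (Suc m)) \<gamma>) 0) =
       Re (winding_number (subpath 0 (s m) \<gamma>) 0) + Re (winding_number ?q 0)"
      using comb[symmetric] by simp
    also have "\<dots> = (\<Sum>j<Suc m. (-1)^(j+1) * (e (Suc j) - e j)) / 2"
      using Suc.IH m arc by (simp add: field_simps)
    finally show ?case .
  qed
  show ?thesis using main[of N] unfolding e_def by simp
qed

definition gg :: "nat \<Rightarrow> real \<Rightarrow> real" where
  "gg n t = sin ((real n + 1) * t) / (real n + 1) - sin (real n * t) / real n"

definition psi :: "nat \<Rightarrow> nat \<Rightarrow> real" where
  "psi n j = 2 * real j * pi / (2 * real n + 1)"

lemma sin_sign:
  assumes "real j * pi < x" "x < (real j + 1) * pi"
  shows "(-1) ^ j * sin x > 0"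
proof -
  have "sin x = sin ((x - real j * pi) + real j * pi)" by simp
  also have "\<dots> = sin (x - real j * pi) * (-1) ^ j"
    by (simp only: sin_add sin_npi cos_npi)
  finally have e: "(-1) ^ j * sin x = sin (x - real j * pi)"
    by (simp add: mult.commute power_mult_distrib[symmetric])
  have "sin (x - real j * pi) > 0"
    by (rule sin_gt_zero) (use assms in \<open>auto simp: algebra_simps\<close>)
  with e show ?thesis by simp
qed

lemma gg_deriv:
  assumes "n \<ge> 1"
  shows "(gg n has_real_derivative (cos ((real n + 1) * t) - cos (real n * t))) (at t)"
proof -
  have "(gg n has_real_derivative (cos ((real n + 1) * t) * (real n + 1) / (real n + 1)
       - cos (real n * t) * real n / real n)) (at t)"
    unfolding gg_def[abs_def] by (auto intro!: derivative_eq_intros)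
  then show ?thesis using assms by simp
qed

lemma gg_cont: "n \<ge> 1 \<Longrightarrow> continuous_on S (gg n)"
  unfolding gg_def[abs_def] by (intro continuous_intros) auto

lemma gg_deriv_sign:
  assumes n: "n \<ge> 1" and t: "psi n j < t" "t < psi n (Suc j)" and j: "j \<le> n"
  shows "(-1) ^ (j+1) * (cos ((real n + 1) * t) - cos (real n * t)) > 0"
proof -
  have cd: "cos ((real n + 1) * t) - cos (real n * t) = - 2 * sin ((2 * real n + 1) * t / 2) * sin (t / 2)"
    by (simp add: cos_diff_cos algebra_simps)
  have pos: "(-1) ^ j * sin ((2 * real n + 1) * t / 2) > 0"
  proof (rule sin_sign)
    show "real j * pi < (2 * real n + 1) * t / 2"
      using t(1) unfolding psi_def by (simp add: field_simps)
    show "(2 * real n + 1) * t / 2 < (real j + 1) * pi"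
      using t(2) unfolding psi_def by (simp add: field_simps)
  qed
  have t0: "0 < t" using t(1) unfolding psi_def by (smt (verit) divide_nonneg_pos mult_nonneg_nonneg of_nat_0_le_iff pi_ge_zero)
  have "t < 2 * pi"
  proof -
    have "t < 2 * (real j + 1) * pi / (2 * real n + 1)" using t(2) unfolding psi_def by (simp add: algebra_simps)
    also have "\<dots> \<le> 2 * (real n + 1) * pi / (2 * real n + 1)"
      using j by (intro divide_right_mono mult_right_mono) auto
    also have "\<dots> < 2 * pi" using n by (simp add: field_simps)
    finally show ?thesis .
  qed
  then have s: "sin (t / 2) > 0" using t0 by (intro sin_gt_zero) auto
  have e: "(-1)^(j+1) * (- 2 * X * Y) = 2 * (((-1)^j * X) * Y)" for X Y :: real by simp
  show ?thesis unfolding cd e using pos s by simp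
qed

lemma gg_mono:
  assumes n: "n \<ge> 1" and j: "j \<le> n" and xy: "psi n j \<le> x" "x < y" "y \<le> psi n (Suc j)"
  shows "(-1) ^ (j+1) * gg n x < (-1) ^ (j+1) * gg n y"
proof -
  have "(\<lambda>t. (-1) ^ (j+1) * gg n t) x < (\<lambda>t. (-1) ^ (j+1) * gg n t) y"
  proof (rule DERIV_pos_imp_increasing_open[OF xy(2)])
    fix t assume "x < t" "t < y"
    then have "psi n j < t" "t < psi n (Suc j)" using xy by auto
    then show "\<exists>d. ((\<lambda>t. (-1) ^ (j+1) * gg n t) has_real_derivative d) (at t) \<and> 0 < d"
      using gg_deriv_sign[OF n _ _ j] gg_deriv[OF n] by (blast intro: DERIV_cmult)
  next
    show "continuous_on {x..y} (\<lambda>t. (-1) ^ (j+1) * gg n t)"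
      by (intro continuous_intros gg_cont n)
  qed
  then show ?thesis by simp
qed

lemma gg_left:
  assumes "1 \<le> j" "j < n"
  shows "(-1) ^ j * gg n (real j * pi / real n) > 0"
proof -
  have n: "real n > 0" using assms by simp
  have "(-1) ^ j * sin ((real n + 1) * (real j * pi / real n)) > 0"
  proof (rule sin_sign)
    show "real j * pi < (real n + 1) * (real j * pi / real n)"
      using assms n by (simp add: field_simps)
    have "real j < real n" using assms by simp
    then have "real j * pi < real n * pi" by simp
    then show "(real n + 1) * (real j * pi / real n) < (real j + 1) * pi"
      using n by (simp add: field_simps)
  qed
  moreover have "sin (real n * (real j * pi / real n)) = 0"
    using n by (simp add: sin_npi)
  ultimately show ?thesis unfolding gg_def using n
    by (simp add: divide_pos_pos)
qed

lemma gg_right: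
  assumes "j < n"
  shows "(-1) ^ j * gg n ((real j + 1) * pi / (real n + 1)) < 0"
proof -
  have n: "real n > 0" using assms by simp
  have "(-1) ^ j * sin (real n * ((real j + 1) * pi / (real n + 1))) > 0"
  proof (rule sin_sign)
    have "real j < real n" using assms by simp
    then show "real j * pi < real n * ((real j + 1) * pi / (real n + 1))"
      using n by (simp add: field_simps)
    have "0 < pi + pi * real j"
      by (metis add_pos_nonneg mult_nonneg_nonneg of_nat_0_le_iff pi_ge_zero pi_gt_zero)
    then show "real n * ((real j + 1) * pi / (real n + 1)) < (real j + 1) * pi"
      using n by (simp add: field_simps)
  qed
  moreover have "sin ((real n + 1) * ((real j + 1) * pi / (real n + 1))) = 0"
  proof -
    have "sin (real (Suc j) * pi) = 0" by (rule sin_npi)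
    then show ?thesis using n by (simp add: add.commute)
  qed
  moreover have "0 < pi + pi * real j"
    by (metis add_pos_nonneg mult_nonneg_nonneg of_nat_0_le_iff pi_ge_zero pi_gt_zero)
  ultimately show ?thesis unfolding gg_def using n
    by (simp add: divide_pos_pos)
qed

lemma psi_lt_left:
  assumes "1 \<le> j" "j < n" shows "psi n j < real j * pi / real n"
  using assms unfolding psi_def by (simp add: field_simps)

lemma right_lt_psi:
  shows "(real j + 1) * pi / (real n + 1) < psi n (Suc j)"
proof -
  have "0 < pi + pi * real j"
    by (metis add_pos_nonneg mult_nonneg_nonneg of_nat_0_le_iff pi_ge_zero pi_gt_zero)
  then show ?thesis unfolding psi_def by (simp add: field_simps)
qed

lemma left_lt_right:
  assumes "j < n" shows "real j * pi / real n < (real j + 1) * pi / (real n + 1)"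
proof -
  have "real j < real n" using assms by simp
  then have "real j * pi < real n * pi" by simp
  then show ?thesis using assms by (simp add: field_simps)
qed

lemma right_lt_left:
  assumes "1 \<le> n" shows "(real j + 1) * pi / (real n + 1) < (real j + 1) * pi / real n"
proof -
  have "0 < pi + pi * real j"
    by (metis add_pos_nonneg mult_nonneg_nonneg of_nat_0_le_iff pi_ge_zero pi_gt_zero)
  then show ?thesis using assms by (simp add: field_simps)
qed

lemma tau_exists:
  assumes n: "n \<ge> 1" and j: "1 \<le> j" "j < n"
  shows "\<exists>t. real j * pi / real n < t \<and> t < (real j + 1) * pi / (real n + 1) \<and> gg n t = 0"
proof -
  let ?l = "real j * pi / real n" and ?r = "(real j + 1) * pi / (real n + 1)"
  let ?G = "\<lambda>t. (-1) ^ j * gg n t"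
  have lr: "?l < ?r" using left_lt_right[OF j(2)] .
  have "\<exists>x\<ge>?l. x \<le> ?r \<and> ?G x = 0"
    by (rule IVT2') (use gg_left[OF j] gg_right[OF j(2)] lr in \<open>auto intro!: continuous_intros gg_cont n\<close>)
  then obtain x where x: "?l \<le> x" "x \<le> ?r" "?G x = 0" by blast
  have "x \<noteq> ?l" using x(3) gg_left[OF j] by auto
  moreover have "x \<noteq> ?r" using x(3) gg_right[OF j(2)] by auto
  ultimately have "?l < x" "x < ?r" using x by auto
  then show ?thesis using x(3) by auto
qed

definition tau :: "nat \<Rightarrow> nat \<Rightarrow> real" where
  "tau n j = (if j = 0 then 0 else if n \<le> j then pi else
     (SOME t. real j * pi / real n < t \<and> t < (real j + 1) * pi / (real n + 1) \<and> gg n t = 0))"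

lemma tau_mid:
  assumes n: "n \<ge> 1" and j: "1 \<le> j" "j < n"
  shows "real j * pi / real n < tau n j" "tau n j < (real j + 1) * pi / (real n + 1)" "gg n (tau n j) = 0"
proof -
  have "real j * pi / real n < tau n j \<and> tau n j < (real j + 1) * pi / (real n + 1) \<and> gg n (tau n j) = 0"
    unfolding tau_def using j by simp (rule someI_ex[OF tau_exists[OF n j]])
  then show "real j * pi / real n < tau n j" "tau n j < (real j + 1) * pi / (real n + 1)" "gg n (tau n j) = 0"
    by auto
qed

lemma tau_0 [simp]: "tau n 0 = 0" by (simp add: tau_def)
lemma tau_n [simp]: "n \<ge> 1 \<Longrightarrow> tau n n = pi" by (simp add: tau_def)

lemma gg_0 [simp]: "gg n 0 = 0" by (simp add: gg_def)
lemma gg_pi [simp]: "gg n pi = 0"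
proof -
  have "sin (real (Suc n) * pi) = 0" by (rule sin_npi)
  then show ?thesis by (simp add: gg_def add.commute)
qed

lemma tau_zero: "n \<ge> 1 \<Longrightarrow> j \<le> n \<Longrightarrow> gg n (tau n j) = 0"
  using tau_mid(3)[of n j] by (cases "j = 0"; cases "j = n") auto

lemma tau_psi:
  assumes n: "n \<ge> 1" and j: "j \<le> n"
  shows "psi n j \<le> tau n j" "tau n j \<le> psi n (Suc j)"
proof -
  have "psi n j \<le> tau n j \<and> tau n j \<le> psi n (Suc j)"
  proof (cases "j = 0")
    case True
    then show ?thesis by (simp add: psi_def)
  next
    case j0: False
    show ?thesis
    proof (cases "j = n")
      case True
      have "2 * real n * pi \<le> (2 * real n + 1) * pi" by (simp add: algebra_simps)
      moreover have "(2 * real n + 1) * pi \<le> 2 * (real n + 1) * pi" by (simp add: algebra_simps)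
      ultimately show ?thesis using True n unfolding psi_def by (simp add: field_simps)
    next
      case False
      then have jj: "1 \<le> j" "j < n" using j j0 by auto
      show ?thesis using tau_mid[OF n jj] psi_lt_left[OF jj] right_lt_psi[of j n] by auto
    qed
  qed
  then show "psi n j \<le> tau n j" "tau n j \<le> psi n (Suc j)" by auto
qed

lemma tau_strict:
  assumes n: "n \<ge> 1" and j: "j < n"
  shows "tau n j < tau n (Suc j)"
proof -
  have A: "tau n j < (real j + 1) * pi / (real n + 1)"
  proof (cases "j = 0")
    case True
    then show ?thesis by (simp add: divide_pos_pos)
  next
    case False
    then show ?thesis using tau_mid(2)[OF n _ j] by simp
  qed
  have B: "(real j + 1) * pi / real n \<le> tau n (Suc j)"
  proof (cases "Suc j = n")
    case True
    then have e: "real n = real j + 1" by (metis of_nat_Suc add.commute)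
    have "real j + 1 > 0" by simp
    then show ?thesis using True unfolding e by simp
  next
    case False
    then show ?thesis using tau_mid(1)[OF n, of "Suc j"] j by (simp add: add.commute)
  qed
  show ?thesis using A B right_lt_left[OF n, of j] by linarith
qed

lemma tau_mono:
  assumes n: "n \<ge> 1" and ij: "i \<le> j" "j \<le> n"
  shows "tau n i \<le> tau n j"
  using ij
proof (induction j)
  case 0 then show ?case by simp
next
  case (Suc j)
  show ?case
  proof (cases "i = Suc j")
    case True then show ?thesis by simp
  next
    case False
    then have "i \<le> j" "j \<le> n" using Suc.prems by auto
    then show ?thesis using Suc.IH tau_strict[OF n, of j] Suc.prems by force
  qed
qed

lemma gg_sign_between:
  assumes n: "n \<ge> 1" and j: "j < n" and t: "tau n j < t" "t < tau n (Suc j)"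
  shows "(-1) ^ (j+1) * gg n t > 0"
proof (cases "t \<le> psi n (Suc j)")
  case True
  have "(-1) ^ (j+1) * gg n (tau n j) < (-1) ^ (j+1) * gg n t"
    by (rule gg_mono[OF n _ tau_psi(1)[OF n] t(1) True]) (use j in auto)
  then show ?thesis using tau_zero[OF n, of j] j by simp
next
  case False
  have "(-1) ^ (Suc j+1) * gg n t < (-1) ^ (Suc j+1) * gg n (tau n (Suc j))"
    by (rule gg_mono[OF n _ _ t(2) tau_psi(2)[OF n]]) (use j False in auto)
  then show ?thesis using tau_zero[OF n, of "Suc j"] j by simp
qed

definition phi :: "nat \<Rightarrow> complex \<Rightarrow> complex" where
  "phi n z = z ^ (n+1) / of_nat (n+1) - inverse (cnj z ^ n) / of_nat n"

lemma f_phi: "f_a n a z = of_real a * phi n z + cnj (phi n z) - 1"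
  unfolding f_a_def phi_def by (simp add: field_simps)

lemma Re_f: "Re (f_a n a z) = (a + 1) * Re (phi n z) - 1"
  unfolding f_phi by (simp add: algebra_simps)

lemma Im_f: "Im (f_a n a z) = (a - 1) * Im (phi n z)"
  unfolding f_phi by (simp add: algebra_simps)

lemma f_zero_iff:
  assumes "a > 1"
  shows "f_a n a z = 0 \<longleftrightarrow> Re (phi n z) = 1 / (a + 1) \<and> Im (phi n z) = 0"
proof -
  have "f_a n a z = 0 \<longleftrightarrow> Re (f_a n a z) = 0 \<and> Im (f_a n a z) = 0" by (simp add: complex_eq_iff)
  also have "\<dots> \<longleftrightarrow> Re (phi n z) = 1 / (a + 1) \<and> Im (phi n z) = 0"
    using assms unfolding Re_f Im_f by (auto simp: field_simps)
  finally show ?thesis .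
qed

lemma phi_cnj: "phi n (cnj z) = cnj (phi n z)"
  unfolding phi_def by simp

lemma f_cnj: "f_a n a (cnj z) = cnj (f_a n a z)"
  unfolding f_a_def by simp

lemma phi_polar:
  assumes n: "n \<ge> 1"
  shows "phi n (exp (Complex r t)) =
    Complex (exp ((real n + 1) * r) * cos ((real n + 1) * t) / (real n + 1) - exp (- (real n * r)) * cos (real n * t) / real n)
            (exp ((real n + 1) * r) * sin ((real n + 1) * t) / (real n + 1) - exp (- (real n * r)) * sin (real n * t) / real n)"
proof -
  have m1: "of_nat (n+1) * Complex r t = Complex ((real n + 1) * r) ((real n + 1) * t)"
    by (simp add: complex_eq_iff)
  have e1: "exp (Complex r t) ^ (n+1) = exp (Complex ((real n + 1) * r) ((real n + 1) * t))"
    by (metis m1 exp_of_nat_mult)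
  have m2: "- (of_nat n * cnj (Complex r t)) = Complex (- (real n * r)) (real n * t)"
    by (simp add: complex_eq_iff)
  have e2: "inverse (cnj (exp (Complex r t)) ^ n) = exp (Complex (- (real n * r)) (real n * t))"
    by (metis m2 exp_cnj exp_of_nat_mult exp_minus)
  show ?thesis
    unfolding phi_def e1 e2 using n by (simp add: exp_Complex complex_eq_iff Re_divide_of_nat Im_divide_of_nat)
qed

lemma circ_eq: "circlepath 0 1 t = exp (Complex 0 (2 * pi * t))"
proof -
  have "2 * of_real pi * \<i> * of_real t = Complex 0 (2 * pi * t)" by (simp add: complex_eq_iff)
  then show ?thesis by (simp add: circlepath)
qed

lemma Re_f_circ:
  assumes "n \<ge> 1"
  shows "Re (f_a n a (exp (Complex 0 t))) = (a + 1) * (cos ((real n + 1) * t) / (real n + 1) - cos (real n * t) / real n) - 1"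
  unfolding Re_f phi_polar[OF assms] by simp

lemma Im_f_circ:
  assumes "n \<ge> 1"
  shows "Im (f_a n a (exp (Complex 0 t))) = (a - 1) * gg n t"
  unfolding Im_f phi_polar[OF assms] gg_def by simp

lemma f_cont: "continuous_on (-{0}) (f_a n a)"
  unfolding f_a_def[abs_def] by (intro continuous_intros) auto

lemma circ_sym: "circlepath 0 1 (1 - t) = cnj (circlepath 0 1 t)"
proof -
  have "exp (Complex 0 (2 * pi * (1 - t))) = cnj (exp (Complex 0 (2 * pi * t)))"
    by (simp add: exp_Complex complex_eq_iff algebra_simps cos_diff sin_diff)
  then show ?thesis by (simp add: circ_eq)
qed

lemma W_formula:
  assumes n: "n \<ge> 1" and a: "a > 1" and hyp: "\<forall>z. cmod z = 1 \<longrightarrow> f_a n a z \<noteq> 0"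
  shows "winding_number (f_a n a \<circ> circlepath 0 1) 0 =
    of_real (\<Sum>j<n. (-1)^(j+1) * ((if Re (f_a n a (exp (Complex 0 (tau n (Suc j))))) < 0 then 1 else 0)
                                 - (if Re (f_a n a (exp (Complex 0 (tau n j)))) < 0 then 1 else 0)))"
proof -
  define \<gamma> where "\<gamma> = f_a n a \<circ> circlepath 0 1"
  have \<gamma>t: "\<gamma> t = f_a n a (exp (Complex 0 (2 * pi * t)))" for t
    unfolding \<gamma>_def by (simp add: circ_eq)
  have nc: "cmod (circlepath 0 1 t) = 1" for t by (simp add: circlepath)
  have nz: "circlepath 0 1 ` {0..1} \<subseteq> - {0}"
  proof
    fix w assume "w \<in> circlepath 0 1 ` {0..1}"
    then obtain t where "w = circlepath 0 1 t" by auto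
    then have "cmod w = 1" using nc by simp
    then show "w \<in> - {0}" by auto
  qed
  have p: "path \<gamma>" unfolding \<gamma>_def path_def
    by (rule continuous_on_compose[OF path_circlepath[unfolded path_def] continuous_on_subset[OF f_cont nz]])
  have z: "0 \<notin> path_image \<gamma>" using hyp nc unfolding \<gamma>_def path_image_def by auto
  have sym: "\<gamma> (1 - t) = cnj (\<gamma> t)" for t unfolding \<gamma>_def by (simp add: circ_sym f_cnj)
  have half: "subpath (1/2) 1 \<gamma> = cnj \<circ> reversepath (subpath 0 (1/2) \<gamma>)"
  proof
    fix t
    have "1 - (1 - t) / 2 = (1 - 1/2) * t + (1/2::real)" by (simp add: field_simps)
    then have "subpath (1/2) 1 \<gamma> t = \<gamma> (1 - (1 - t) / 2)" by (simp add: subpath_def)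
    also have "\<dots> = cnj (\<gamma> ((1 - t) / 2))" by (rule sym)
    finally show "subpath (1/2) 1 \<gamma> t = (cnj \<circ> reversepath (subpath 0 (1/2) \<gamma>)) t"
      by (simp add: subpath_def reversepath_def)
  qed
  let ?q = "subpath 0 (1/2) \<gamma>"
  have q: "path ?q" using p by simp
  have qz: "0 \<notin> path_image ?q" using z path_image_subpath_subset[of 0 "1/2" \<gamma>] by auto
  have "winding_number \<gamma> 0 = winding_number ?q 0 + winding_number (subpath (1/2) 1 \<gamma>) 0"
    using winding_number_subpath_combine[OF p z, of 0 "1/2" 1] by simp
  also have "winding_number (subpath (1/2) 1 \<gamma>) 0 = cnj (winding_number ?q 0)"
  proof -
    have rp: "path (reversepath ?q)" "0 \<notin> path_image (reversepath ?q)" using q qz by auto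
    have "winding_number (cnj \<circ> reversepath ?q) (cnj 0) = - cnj (winding_number (reversepath ?q) 0)"
      by (rule winding_number_cnj[OF rp])
    then show ?thesis unfolding half using winding_number_reversepath[OF q qz] by simp
  qed
  also have "winding_number ?q 0 + cnj (winding_number ?q 0) = of_real (2 * Re (winding_number ?q 0))"
    by (simp add: complex_add_cnj)
  finally have W: "winding_number \<gamma> 0 = of_real (2 * Re (winding_number ?q 0))" .
  define s where "s = (\<lambda>j. tau n j / (2 * pi))"
  have sN: "s n = 1/2" using n by (simp add: s_def)
  have gs: "\<gamma> (s j) = f_a n a (exp (Complex 0 (tau n j)))" for j
    unfolding \<gamma>t s_def by simp
  have "Re (winding_number (subpath 0 (s n) \<gamma>) 0) =
     (\<Sum>j<n. (-1)^(j+1) * ((if Re (\<gamma> (s (Suc j))) < 0 then 1 else 0) - (if Re (\<gamma> (s j)) < 0 then 1 else 0))) / 2"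
  proof (rule winding_sum[OF p z])
    show "s 0 = 0" by (simp add: s_def)
    show "s n \<le> 1" using sN by simp
    show "s j < s (Suc j)" if "j < n" for j
      using tau_strict[OF n that] by (simp add: s_def divide_strict_right_mono)
    show "Im (\<gamma> (s j)) = 0" if "j \<le> n" for j
      unfolding gs Im_f_circ[OF n] using tau_zero[OF n that] by simp
    show "(-1)^(j+1) * Im (\<gamma> t) > 0" if "j < n" "s j < t" "t < s (Suc j)" for j t
    proof -
      have "tau n j < 2 * pi * t" "2 * pi * t < tau n (Suc j)"
        using that(2,3) unfolding s_def by (simp_all add: field_simps)
      then have "(-1) ^ (j+1) * gg n (2 * pi * t) > 0" using gg_sign_between[OF n that(1)] by blast
      then show ?thesis unfolding \<gamma>t Im_f_circ[OF n] using a
        by (metis mult.left_commute mult_pos_pos diff_gt_0_iff_gt)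
    qed
  qed
  then have "2 * Re (winding_number ?q 0) =
    (\<Sum>j<n. (-1)^(j+1) * ((if Re (f_a n a (exp (Complex 0 (tau n (Suc j))))) < 0 then 1 else 0)
                                 - (if Re (f_a n a (exp (Complex 0 (tau n j)))) < 0 then 1 else 0)))"
    unfolding sN gs by simp
  then show ?thesis using W unfolding \<gamma>_def by simp
qed

definition MM :: "nat \<Rightarrow> real \<Rightarrow> real" where
  "MM n t = (2 * real n + 1) * ln (sin t) - (real n + 1) * ln (- sin ((real n + 1) * t)) - real n * ln (- sin (real n * t))"

definition CC :: "nat \<Rightarrow> real \<Rightarrow> real" where
  "CC n c = real n * ln (real n + 1) - real n * ln (real n) + (2 * real n + 1) * (ln c + ln (real n))"

definition rho0 :: "nat \<Rightarrow> real \<Rightarrow> real" where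
  "rho0 n t = (ln (real n + 1) + ln (- sin (real n * t)) - ln (real n) - ln (- sin ((real n + 1) * t))) / (2 * real n + 1)"

lemma polar_zero:
  fixes n :: nat and c r t :: real
  assumes n: "n \<ge> 1" and c: "c > 0" and t: "0 < t" "t < pi"
  shows "phi n (exp (Complex r t)) = of_real c \<longleftrightarrow>
     (sin (real n * t) < 0 \<and> sin ((real n + 1) * t) < 0 \<and> r = rho0 n t \<and> MM n t = CC n c)"
proof -
  define N where "N = real n"
  have N: "N \<ge> 1" using n by (simp add: N_def)
  define sA sB cA cB where "sA = sin (N * t)" "sB = sin ((N + 1) * t)" "cA = cos (N * t)" "cB = cos ((N + 1) * t)"
  have st: "sin t > 0" using t by (simp add: sin_gt_zero)
  have sub: "sin t = sB * cA - cB * sA"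
  proof -
    have "t = (N + 1) * t - N * t" by (simp add: algebra_simps)
    then have "sin t = sin ((N + 1) * t - N * t)" by simp
    then show ?thesis unfolding sA_sB_cA_cB_def sin_diff by simp
  qed
  define E1 E2 where "E1 = exp ((N + 1) * r)" "E2 = exp (- (N * r))"
  have E1p: "E1 > 0" and E2p: "E2 > 0" by (simp_all add: E1_E2_def)
  have E12: "E1 = E2 * exp ((2 * N + 1) * r)"
    unfolding E1_E2_def by (simp add: exp_add[symmetric] algebra_simps)
  have iff0: "phi n (exp (Complex r t)) = of_real c \<longleftrightarrow>
      (E1 * cB / (N + 1) - E2 * cA / N = c \<and> E1 * sB / (N + 1) - E2 * sA / N = 0)"
    unfolding phi_polar[OF n] by (simp add: complex_eq_iff E1_E2_def sA_sB_cA_cB_def N_def)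
  have key: "(E1 * cB / (N + 1) - E2 * cA / N) * sB = - E2 * sin t / N"
    if Q: "E1 * sB / (N + 1) - E2 * sA / N = 0"
  proof -
    have q: "E1 * sB / (N + 1) = E2 * sA / N" using Q by simp
    have "(E1 * cB / (N + 1) - E2 * cA / N) * sB = cB * (E1 * sB / (N + 1)) - E2 * cA * sB / N"
      using N by (simp add: field_simps)
    also have "\<dots> = cB * (E2 * sA / N) - E2 * cA * sB / N" by (simp only: q)
    also have "\<dots> = - E2 * (sB * cA - cB * sA) / N" using N by (simp add: field_simps)
    finally show ?thesis by (simp only: sub)
  qed
  have lnq: "ln ((N + 1) * x / (N * y)) = ln (N + 1) + ln x - ln N - ln y" if "x > 0" "y > 0" for x y
    using that N by (simp add: ln_div ln_mult)
  have lnq2: "ln (c * N * x / sin t) = ln c + ln N + ln x - ln (sin t)" if "x > 0" for x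
    using that N c st by (simp add: ln_div ln_mult)
  have lnE: "(2 * N + 1) * r = ln (E1 / E2)"
    using E12 E2p by simp
  show ?thesis
  proof
    assume "phi n (exp (Complex r t)) = of_real c"
    then have P: "E1 * cB / (N + 1) - E2 * cA / N = c" and Q: "E1 * sB / (N + 1) - E2 * sA / N = 0"
      using iff0 by auto
    have csB: "c * sB = - E2 * sin t / N" using key[OF Q] P by simp
    have sBn: "sB < 0"
    proof -
      have "- E2 * sin t / N < 0" using E2p st N by (simp add: divide_pos_pos)
      then have "c * sB < 0" using csB by simp
      then show ?thesis using c by (simp add: mult_less_0_iff)
    qed
    have N0: "N \<noteq> 0" "N + 1 \<noteq> 0" "E2 \<noteq> 0" using N E2p by auto
    have q: "E2 * sA / N = E1 * sB / (N + 1)" using Q by simp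
    have "sA = (E2 * sA / N) * N / E2" using N0 by simp
    then have sAe: "sA = (E1 * sB / (N + 1)) * N / E2" using q by simp
    have X: "E1 * sB / (N + 1) < 0" using E1p sBn N by (simp add: mult_pos_neg divide_neg_pos)
    have "(E1 * sB / (N + 1)) * N < 0" using X N by (intro mult_neg_pos) auto
    then have "(E1 * sB / (N + 1)) * N / E2 < 0" using E2p by (rule divide_neg_pos)
    then have sAn: "sA < 0" by (metis sAe)
    have rat: "E1 / E2 = (N + 1) * (- sA) / (N * (- sB))"
    proof -
      have "(N + 1) * (- sA) / (N * (- sB)) = (N + 1) * (E1 * sB / (N + 1)) * N / E2 / (N * sB)"
        by (subst sAe) (simp add: divide_simps)
      also have "\<dots> = E1 / E2" using N0 sBn by (simp add: divide_simps)
      finally show ?thesis by simp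
    qed
    have r0: "r = rho0 n t"
    proof -
      have "(2 * N + 1) * r = ln ((N + 1) * (- sA) / (N * (- sB)))" using lnE rat by simp
      also have "\<dots> = ln (N + 1) + ln (- sA) - ln N - ln (- sB)"
        by (rule lnq) (use sAn sBn in auto)
      finally show ?thesis unfolding rho0_def N_def[symmetric] sA_sB_cA_cB_def[symmetric]
        using N by (simp add: field_simps)
    qed
    have E2e: "E2 = c * N * (- sB) / sin t" using csB st N by (simp add: field_simps)
    have "- (N * r) = ln c + ln N + ln (- sB) - ln (sin t)"
    proof -
      have "- (N * r) = ln E2" by (simp add: E1_E2_def)
      also have "\<dots> = ln (c * N * (- sB) / sin t)" using E2e by simp
      also have "\<dots> = ln c + ln N + ln (- sB) - ln (sin t)"
        by (rule lnq2) (use sBn in auto)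
      finally show ?thesis .
    qed
    then have "MM n t = CC n c"
      using r0 N unfolding MM_def CC_def rho0_def N_def[symmetric] sA_sB_cA_cB_def[symmetric]
      by (simp add: field_simps)
    then show "sin (real n * t) < 0 \<and> sin ((real n + 1) * t) < 0 \<and> r = rho0 n t \<and> MM n t = CC n c"
      using sAn sBn r0 by (simp add: sA_sB_cA_cB_def N_def)
  next
    assume H: "sin (real n * t) < 0 \<and> sin ((real n + 1) * t) < 0 \<and> r = rho0 n t \<and> MM n t = CC n c"
    then have sAn: "sA < 0" and sBn: "sB < 0" and r0: "r = rho0 n t" and MC: "MM n t = CC n c"
      by (auto simp: sA_sB_cA_cB_def N_def)
    have "(2 * N + 1) * r = ln (N + 1) + ln (- sA) - ln N - ln (- sB)"
      using r0 N unfolding rho0_def N_def[symmetric] sA_sB_cA_cB_def[symmetric] by (simp add: field_simps)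
    also have "\<dots> = ln ((N + 1) * (- sA) / (N * (- sB)))"
      by (rule lnq[symmetric]) (use sAn sBn in auto)
    finally have "ln (E1 / E2) = ln ((N + 1) * (- sA) / (N * (- sB)))" using lnE by simp
    moreover have pos: "(N + 1) * (- sA) / (N * (- sB)) > 0"
      by (intro divide_pos_pos mult_pos_pos) (use sAn sBn N in auto)
    moreover have "E1 / E2 > 0" using E1p E2p by simp
    ultimately have rat: "E1 / E2 = (N + 1) * (- sA) / (N * (- sB))"
      using ln_inj_iff by blast
    have Q: "E1 * sB / (N + 1) - E2 * sA / N = 0"
      using rat E2p sBn N by (simp add: field_simps)
    have e1: "(2 * N + 1) * r = ln (N + 1) + ln (- sA) - ln N - ln (- sB)"
      using r0 N unfolding rho0_def N_def[symmetric] sA_sB_cA_cB_def[symmetric] by (simp add: field_simps)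
    have e2: "(2 * N + 1) * ln (sin t) - (N + 1) * ln (- sB) - N * ln (- sA) =
        N * ln (N + 1) - N * ln N + (2 * N + 1) * (ln c + ln N)"
      using MC unfolding MM_def CC_def N_def[symmetric] sA_sB_cA_cB_def[symmetric] by simp
    have "(2 * N + 1) * (- (N * r)) = (2 * N + 1) * (ln c + ln N + ln (- sB) - ln (sin t))"
      using e1 e2 by algebra
    moreover have "2 * N + 1 \<noteq> 0" using N by simp
    ultimately have "- (N * r) = ln c + ln N + ln (- sB) - ln (sin t)"
      using mult_left_cancel by blast
    also have "\<dots> = ln (c * N * (- sB) / sin t)"
      by (rule lnq2[symmetric]) (use sBn in auto)
    finally have "ln E2 = ln (c * N * (- sB) / sin t)" by (simp add: E1_E2_def)
    moreover have "c * N * (- sB) / sin t > 0"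
      by (intro divide_pos_pos mult_pos_pos) (use c sBn N st in auto)
    ultimately have E2e: "E2 = c * N * (- sB) / sin t"
      using E2p ln_inj_iff by blast
    have "- E2 * sin t / N = c * sB" unfolding E2e using st N by (simp add: field_simps)
    then have "(E1 * cB / (N + 1) - E2 * cA / N) * sB = c * sB"
      using key[OF Q] by simp
    then have P: "E1 * cB / (N + 1) - E2 * cA / N = c" using sBn by simp
    show "phi n (exp (Complex r t)) = of_real c" using iff0 P Q by simp
  qed
qed

lemma valley:
  fixes F :: "real \<Rightarrow> real" and S :: "real set"
  assumes conv: "\<And>x y z. x \<in> S \<Longrightarrow> y \<in> S \<Longrightarrow> x \<le> z \<Longrightarrow> z \<le> y \<Longrightarrow> z \<in> S"
    and m: "m \<in> S" and cont: "continuous_on S F"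
    and dec: "\<And>x y. x \<in> S \<Longrightarrow> x < y \<Longrightarrow> y \<le> m \<Longrightarrow> F y < F x"
    and inc: "\<And>x y. m \<le> x \<Longrightarrow> x < y \<Longrightarrow> y \<in> S \<Longrightarrow> F x < F y"
    and ul: "\<And>C. \<exists>x\<in>S. x < m \<and> F x > C"
    and ur: "\<And>C. \<exists>x\<in>S. x > m \<and> F x > C"
    and ne: "F m \<noteq> c"
  shows "finite {x\<in>S. F x = c} \<and> card {x\<in>S. F x = c} = (if F m < c then 2 else 0)"
proof (cases "F m < c")
  case False
  then have gt: "F m > c" using ne by auto
  have "F x \<noteq> c" if x: "x \<in> S" for x
  proof -
    consider "x < m" | "x = m" | "x > m" by linarith
    then show ?thesis
    proof cases
      case 1 then show ?thesis using dec[OF x(1) 1] x gt by auto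
    next
      case 2 then show ?thesis using x ne by auto
    next
      case 3 then show ?thesis using inc[OF _ 3 x(1)] x gt by auto
    qed
  qed
  then have E: "{x\<in>S. F x = c} = {}" by auto
  show ?thesis unfolding E using False by simp
next
  case True
  obtain x0 where x0: "x0 \<in> S" "x0 < m" "F x0 > c" using ul by blast
  obtain y0 where y0: "y0 \<in> S" "y0 > m" "F y0 > c" using ur by blast
  have s1: "{x0..m} \<subseteq> S" using conv[OF x0(1) m] by auto
  have s2: "{m..y0} \<subseteq> S" using conv[OF m y0(1)] by auto
  have "\<exists>x\<ge>x0. x \<le> m \<and> F x = c"
    by (rule IVT2') (use x0 True continuous_on_subset[OF cont s1] in auto)
  then obtain x1 where x1: "x0 \<le> x1" "x1 \<le> m" "F x1 = c" by blast
  have "\<exists>x\<ge>m. x \<le> y0 \<and> F x = c"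
    by (rule IVT') (use y0 True continuous_on_subset[OF cont s2] in auto)
  then obtain x2 where x2: "m \<le> x2" "x2 \<le> y0" "F x2 = c" by blast
  have x1m: "x1 < m" using x1 True by (cases "x1 = m") auto
  have x2m: "m < x2" using x2 True by (cases "x2 = m") auto
  have x1S: "x1 \<in> S" using conv[OF x0(1) m] x1 by auto
  have x2S: "x2 \<in> S" using conv[OF m y0(1)] x2 by auto
  have sub: "x = x1" if x: "x \<in> S" "F x = c" "x \<noteq> x2" for x
  proof -
    consider "x < x1" | "x = x1" | "x1 < x \<and> x \<le> m" | "m < x \<and> x < x2" | "x2 < x" | "x = x2" by linarith
    then show "x = x1"
    proof cases
      case 1 then show ?thesis using dec[OF x(1) 1 x1(2)] x x1 by auto
    next
      case 2 then show ?thesis .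
    next
      case 3 then show ?thesis using dec[OF x1S, of x] x(2) x1(3) by auto
    next
      case 4 then show ?thesis using inc[of x x2] x2S x(2) x2(3) by auto
    next
      case 5 then show ?thesis using inc[OF x2(1) 5 x(1)] x x2 by auto
    next
      case 6 then show ?thesis using x(3) by simp
    qed
  qed
  have "{x\<in>S. F x = c} = {x1, x2}"
    using sub x1S x1(3) x2S x2(3) by blast
  then show ?thesis using True x1m x2m by simp
qed

lemma sign_J:
  assumes n: "n \<ge> 1" and j: "j < n" and t: "real j * pi / real n < t" "t < (real j + 1) * pi / (real n + 1)"
  shows "(-1) ^ j * sin (real n * t) > 0" "(-1) ^ j * sin ((real n + 1) * t) > 0" "sin t > 0" "0 < t" "t < pi"
proof -
  have N: "real n \<ge> 1" using n by simp
  have jn: "real j + 1 \<le> real n" using j by linarith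
  have t0: "0 < t" using t(1) by (smt (verit) divide_nonneg_nonneg of_nat_0_le_iff pi_ge_zero mult_nonneg_nonneg)
  have "t < (real j + 1) * pi / (real n + 1)" by fact
  also have "\<dots> \<le> pi" using jn by (simp add: field_simps)
  finally have tpi: "t < pi" .
  show "0 < t" "t < pi" by fact+
  show "sin t > 0" using t0 tpi by (simp add: sin_gt_zero)
  show "(-1) ^ j * sin (real n * t) > 0"
  proof (rule sin_sign)
    show "real j * pi < real n * t" using t(1) N by (simp add: field_simps)
    have "real n * t < real n * ((real j + 1) * pi / (real n + 1))" using t(2) N by (intro mult_strict_left_mono) auto
    also have "\<dots> \<le> (real j + 1) * pi"
    proof -
      have "real n * ((real j + 1) * pi) \<le> (real n + 1) * ((real j + 1) * pi)" by (simp add: algebra_simps)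
      then show ?thesis by (simp add: field_simps)
    qed
    finally show "real n * t < (real j + 1) * pi" .
  qed
  show "(-1) ^ j * sin ((real n + 1) * t) > 0"
  proof (rule sin_sign)
    have "real j * pi \<le> (real n + 1) * (real j * pi / real n)" using N by (simp add: field_simps)
    also have "\<dots> < (real n + 1) * t" using t(1) by (intro mult_strict_left_mono) auto
    finally show "real j * pi < (real n + 1) * t" .
    show "(real n + 1) * t < (real j + 1) * pi" using t(2) by (simp add: field_simps)
  qed
qed

lemma odd_J:
  assumes n: "n \<ge> 1" and j: "j < n" "odd j" and t: "real j * pi / real n < t" "t < (real j + 1) * pi / (real n + 1)"
  shows "sin (real n * t) < 0" "sin ((real n + 1) * t) < 0"
  using sign_J[OF n j(1) t] j(2) by simp_all

lemma J_of_neg: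
  assumes n: "n \<ge> 1" and t: "0 < t" "t < pi" and s: "sin (real n * t) < 0" "sin ((real n + 1) * t) < 0"
  shows "\<exists>j<n. odd j \<and> real j * pi / real n < t \<and> t < (real j + 1) * pi / (real n + 1)"
proof -
  have N: "real n \<ge> 1" using n by simp
  define k where "k = \<lfloor>real n * t / pi\<rfloor>"
  have k0: "k \<ge> 0" using t N by (simp add: k_def)
  define j where "j = nat k"
  have jk: "real j = of_int k" using k0 by (simp add: j_def)
  have fl: "real j \<le> real n * t / pi" "real n * t / pi < real j + 1"
    unfolding jk k_def by linarith+
  have fl1: "real j * pi \<le> real n * t" using fl(1) by (simp add: field_simps)
  have fl2: "real n * t < (real j + 1) * pi" using fl(2) by (simp add: field_simps)
  have ne: "real j * pi \<noteq> real n * t"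
  proof
    assume "real j * pi = real n * t"
    then have "sin (real n * t) = 0" by (metis sin_npi)
    with s show False by simp
  qed
  then have lt1: "real j * pi < real n * t" using fl1 by simp
  have sg: "(-1) ^ j * sin (real n * t) > 0" using sin_sign[OF lt1 fl2] .
  then have oj: "odd j" using s(1) by (cases "even j") (auto simp: mult_less_0_iff)
  have "real j * pi < real n * pi" using lt1 t N by (smt (verit) mult_strict_left_mono)
  then have jn: "j < n" by simp
  have tl: "real j * pi / real n < t" using lt1 N by (simp add: field_simps)
  have tr: "(real n + 1) * t < (real j + 1) * pi"
  proof (rule ccontr)
    assume "\<not> ?thesis"
    then have ge: "(real (Suc j)) * pi \<le> (real n + 1) * t" by (simp add: add.commute)
    have up: "(real n + 1) * t < (real (Suc j) + 1) * pi" using fl2 t by (simp add: algebra_simps)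
    show False
    proof (cases "real (Suc j) * pi = (real n + 1) * t")
      case True
      then have "sin ((real n + 1) * t) = 0" by (metis sin_npi)
      with s show False by simp
    next
      case False
      then have "real (Suc j) * pi < (real n + 1) * t" using ge by simp
      from sin_sign[OF this up] have "(-1) ^ Suc j * sin ((real n + 1) * t) > 0" .
      with oj s(2) show False by simp
    qed
  qed
  then have "t < (real j + 1) * pi / (real n + 1)" by (simp add: field_simps)
  then show ?thesis using jn oj tl by blast
qed

lemma J_disjoint:
  assumes n: "n \<ge> 1" and ij: "i < j"
    and t1: "real i * pi / real n < t" "t < (real i + 1) * pi / (real n + 1)"
    and t2: "real j * pi / real n < t"
  shows False
proof -
  have "(real i + 1) * pi / (real n + 1) < (real i + 1) * pi / real n"
    using right_lt_left[OF n] .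
  also have "\<dots> \<le> real j * pi / real n"
    using ij n by (intro divide_right_mono mult_right_mono) auto
  finally show False using t1 t2 by simp
qed

definition DD :: "nat \<Rightarrow> real \<Rightarrow> real" where
  "DD n t = (2 * real n + 1) * (cos t / sin t) - (real n + 1)^2 * (cos ((real n + 1) * t) / sin ((real n + 1) * t))
      - (real n)^2 * (cos (real n * t) / sin (real n * t))"

lemma trig_ident:
  fixes A t N :: real
  shows "(2 * N + 1) * cos t * sin (A + t) * sin A - (N + 1)^2 * cos (A + t) * sin t * sin A
     - N^2 * cos A * sin t * sin (A + t) = (N + 1)^2 * (sin A)^2 - N^2 * (sin (A + t))^2"
proof -
  have p: "sin t ^ 2 + cos t ^ 2 = 1" by simp
  show ?thesis unfolding sin_add cos_add using p by algebra
qed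

lemma DD_ident:
  assumes "sin t \<noteq> 0" "sin (real n * t) \<noteq> 0" "sin ((real n + 1) * t) \<noteq> 0"
  shows "DD n t * (sin t * sin (real n * t) * sin ((real n + 1) * t)) =
    (real n + 1)^2 * (sin (real n * t))^2 - (real n)^2 * (sin ((real n + 1) * t))^2"
proof -
  have e: "(real n + 1) * t = real n * t + t" by (simp add: algebra_simps)
  have "DD n t * (sin t * sin (real n * t) * sin ((real n + 1) * t)) =
    (2 * real n + 1) * cos t * sin (real n * t + t) * sin (real n * t) - (real n + 1)^2 * cos (real n * t + t) * sin t * sin (real n * t)
     - (real n)^2 * cos (real n * t) * sin t * sin (real n * t + t)"
    using assms unfolding DD_def e by (simp add: field_simps)
  also have "\<dots> = (real n + 1)^2 * (sin (real n * t))^2 - (real n)^2 * (sin (real n * t + t))^2"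
    by (rule trig_ident)
  finally show ?thesis unfolding e .
qed

lemma MM_deriv:
  assumes n: "n \<ge> 1" and s: "sin t > 0" "sin (real n * t) < 0" "sin ((real n + 1) * t) < 0"
  shows "(MM n has_real_derivative DD n t) (at t)"
proof -
  have "(MM n has_real_derivative
     cos t * (2 * real n + 1) / sin t - cos ((real n + 1) * t) * (real n + 1) * (real n + 1) / sin ((real n + 1) * t)
      - cos (real n * t) * real n * real n / sin (real n * t)) (at t)"
    unfolding MM_def[abs_def] using s by (auto intro!: derivative_eq_intros)
  moreover have "cos t * (2 * real n + 1) / sin t - cos ((real n + 1) * t) * (real n + 1) * (real n + 1) / sin ((real n + 1) * t)
      - cos (real n * t) * real n * real n / sin (real n * t) = DD n t"
  proof -
    have nz: "sin t \<noteq> 0" "sin (real n * t) \<noteq> 0" "sin ((real n + 1) * t) \<noteq> 0" using s by auto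
    show ?thesis unfolding DD_def using nz by (simp add: power2_eq_square field_simps)
  qed
  ultimately show ?thesis by simp
qed

lemma DD_sign:
  assumes n: "n \<ge> 1" and s: "sin t > 0" "sin (real n * t) < 0" "sin ((real n + 1) * t) < 0"
  shows "gg n t < 0 \<Longrightarrow> DD n t < 0" "gg n t > 0 \<Longrightarrow> DD n t > 0"
proof -
  define N sA sB where "N = real n" "sA = sin (real n * t)" "sB = sin ((real n + 1) * t)"
  have N: "N \<ge> 1" using n by (simp add: N_sA_sB_def)
  have P: "sin t * sA * sB > 0" using s by (simp add: N_sA_sB_def mult_pos_neg mult_neg_neg)
  have id: "DD n t * (sin t * sA * sB) = (N + 1)^2 * sA^2 - N^2 * sB^2"
    unfolding N_sA_sB_def using DD_ident[of t n] s by simp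
  have gg: "gg n t = sB / (N + 1) - sA / N" by (simp add: gg_def N_sA_sB_def)
  have sAn: "sA < 0" and sBn: "sB < 0" using s by (simp_all add: N_sA_sB_def)
  show "DD n t < 0" if "gg n t < 0"
  proof -
    have "sB / (N + 1) < sA / N" using that gg by simp
    then have lt: "N * sB < (N + 1) * sA" using N by (simp add: field_simps)
    have "(N + 1) * sA < 0" using sAn N by (simp add: mult_pos_neg)
    then have "(- ((N + 1) * sA))^2 < (- (N * sB))^2"
      by (intro power_strict_mono) (use lt in auto)
    then have "DD n t * (sin t * sA * sB) < 0" unfolding id by (simp add: power_mult_distrib)
    then show ?thesis using P by (smt (verit) mult_nonneg_nonneg)
  qed
  show "DD n t > 0" if "gg n t > 0"
  proof -
    have "sA / N < sB / (N + 1)" using that gg by simp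
    then have lt: "(N + 1) * sA < N * sB" using N by (simp add: field_simps)
    have "N * sB < 0" using sBn N by (simp add: mult_pos_neg)
    then have "(- (N * sB))^2 < (- ((N + 1) * sA))^2"
      by (intro power_strict_mono) (use lt in auto)
    then have "DD n t * (sin t * sA * sB) > 0" unfolding id by (simp add: power_mult_distrib)
    then show ?thesis using P by (smt (verit) mult_nonpos_nonneg)
  qed
qed

lemma MM_lim_left:
  assumes n: "n \<ge> 1" and j: "j < n" "odd j"
  shows "filterlim (MM n) at_top (at_right (real j * pi / real n))"
proof -
  define l r N where "l = real j * pi / real n" "r = (real j + 1) * pi / (real n + 1)" "N = real n"
  have N: "N \<ge> 1" using n by (simp add: l_r_N_def)
  have lr: "l < r" unfolding l_r_N_def using left_lt_right[OF j(1)] .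
  have j1: "1 \<le> j" using j by (cases j) auto
  have ev: "eventually (\<lambda>t. l < t \<and> t < r) (at_right l)"
    unfolding eventually_at_right_field using lr by blast
  have sl: "sin (N * l) = 0" unfolding l_r_N_def using N by (simp add: sin_npi)
  have t1: "((\<lambda>t. - sin (N * t)) \<longlongrightarrow> 0) (at_right l)"
  proof -
    have "((\<lambda>t. - sin (N * t)) \<longlongrightarrow> - sin (N * l)) (at_right l)"
      by (intro tendsto_intros)
    then show ?thesis using sl by simp
  qed
  have ev2: "eventually (\<lambda>t. 0 < - sin (N * t)) (at_right l)"
    using ev by eventually_elim (use odd_J[OF n j] in \<open>auto simp: l_r_N_def\<close>)
  have f1: "filterlim (\<lambda>t. - sin (N * t)) (at_right 0) (at_right l)"
    by (rule tendsto_imp_filterlim_at_right[OF t1 ev2])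
  have f2: "filterlim (\<lambda>t. ln (- sin (N * t))) at_bot (at_right l)"
    by (rule filterlim_compose[OF ln_at_0 f1])
  have f3: "filterlim (\<lambda>t. - ln (- sin (N * t))) at_top (at_right l)"
    unfolding filterlim_uminus_at_top[of "\<lambda>t. - ln (- sin (N * t))"] using f2 by simp
  have f4: "filterlim (\<lambda>t. N * (- ln (- sin (N * t)))) at_top (at_right l)"
    by (rule filterlim_tendsto_pos_mult_at_top[OF tendsto_const _ f3]) (use N in simp)
  have lpos: "0 < l" unfolding l_r_N_def using j1 n by (intro divide_pos_pos mult_pos_pos) auto
  have Nl: "N * l = real j * pi" unfolding l_r_N_def using n by simp
  have ls: "sin l \<noteq> 0"
  proof -
    have "l < pi" unfolding l_r_N_def using j n by (simp add: field_simps)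
    with lpos
    show ?thesis using sin_gt_zero[of l] by simp
  qed
  have ls2: "sin ((N + 1) * l) \<noteq> 0"
  proof -
    have "(-1) ^ j * sin ((N + 1) * l) > 0"
    proof (rule sin_sign)
      show "real j * pi < (N + 1) * l" using Nl lpos by (simp add: algebra_simps)
      have "(N + 1) * l < (N + 1) * r" using lr N by simp
      also have "\<dots> = (real j + 1) * pi" unfolding l_r_N_def by simp
      finally show "(N + 1) * l < (real j + 1) * pi" .
    qed
    then show ?thesis by auto
  qed
  have t2: "((\<lambda>t. (2 * N + 1) * ln (sin t) - (N + 1) * ln (- sin ((N + 1) * t)))
      \<longlongrightarrow> (2 * N + 1) * ln (sin l) - (N + 1) * ln (- sin ((N + 1) * l))) (at_right l)"
    using ls ls2 by (intro tendsto_intros) auto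
  have "filterlim (\<lambda>t. ((2 * N + 1) * ln (sin t) - (N + 1) * ln (- sin ((N + 1) * t))) + N * (- ln (- sin (N * t))))
     at_top (at_right l)"
    by (rule filterlim_tendsto_add_at_top[OF t2 f4])
  moreover have "(\<lambda>t. ((2 * N + 1) * ln (sin t) - (N + 1) * ln (- sin ((N + 1) * t))) + N * (- ln (- sin (N * t)))) = MM n"
    by (rule ext) (simp add: MM_def l_r_N_def)
  ultimately show ?thesis by (simp add: l_r_N_def)
qed

lemma MM_lim_right:
  assumes n: "n \<ge> 1" and j: "j < n" "odd j"
  shows "filterlim (MM n) at_top (at_left ((real j + 1) * pi / (real n + 1)))"
proof -
  define l r N where "l = real j * pi / real n" "r = (real j + 1) * pi / (real n + 1)" "N = real n"
  have N: "N \<ge> 1" using n by (simp add: l_r_N_def)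
  have lr: "l < r" unfolding l_r_N_def using left_lt_right[OF j(1)] .
  have j1: "1 \<le> j" using j by (cases j) auto
  have ev: "eventually (\<lambda>t. l < t \<and> t < r) (at_left r)"
    unfolding eventually_at_left_field using lr by blast
  have Nr: "(N + 1) * r = real (Suc j) * pi" unfolding l_r_N_def by (simp add: add.commute)
  have sr: "sin ((N + 1) * r) = 0" unfolding Nr by (rule sin_npi)
  have t1: "((\<lambda>t. - sin ((N + 1) * t)) \<longlongrightarrow> 0) (at_left r)"
  proof -
    have "((\<lambda>t. - sin ((N + 1) * t)) \<longlongrightarrow> - sin ((N + 1) * r)) (at_left r)"
      by (intro tendsto_intros)
    then show ?thesis using sr by simp
  qed
  have ev2: "eventually (\<lambda>t. 0 < - sin ((N + 1) * t)) (at_left r)"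
    using ev by eventually_elim (use odd_J[OF n j] in \<open>auto simp: l_r_N_def\<close>)
  have f1: "filterlim (\<lambda>t. - sin ((N + 1) * t)) (at_right 0) (at_left r)"
    by (rule tendsto_imp_filterlim_at_right[OF t1 ev2])
  have f2: "filterlim (\<lambda>t. ln (- sin ((N + 1) * t))) at_bot (at_left r)"
    by (rule filterlim_compose[OF ln_at_0 f1])
  have f3: "filterlim (\<lambda>t. - ln (- sin ((N + 1) * t))) at_top (at_left r)"
    unfolding filterlim_uminus_at_top[of "\<lambda>t. - ln (- sin ((N + 1) * t))"] using f2 by simp
  have f4: "filterlim (\<lambda>t. (N + 1) * (- ln (- sin ((N + 1) * t)))) at_top (at_left r)"
    by (rule filterlim_tendsto_pos_mult_at_top[OF tendsto_const _ f3]) (use N in simp)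
  have rpos: "0 < r" unfolding l_r_N_def by (intro divide_pos_pos mult_pos_pos) auto
  have rpi: "r < pi" unfolding l_r_N_def using j by (simp add: field_simps)
  have rs: "sin r \<noteq> 0" using sin_gt_zero[of r] rpos rpi by simp
  have rs2: "sin (N * r) \<noteq> 0"
  proof -
    have "(-1) ^ j * sin (N * r) > 0"
    proof (rule sin_sign)
      have jn: "real j < real n" using j by simp
      have "real j * pi * (real n + 1) < real n * ((real j + 1) * pi)"
        using jn by (simp add: algebra_simps)
      then show "real j * pi < N * r" unfolding l_r_N_def
        by (simp add: field_simps)
      have "N * r < (N + 1) * r" using rpos by simp
      also have "\<dots> = (real j + 1) * pi" unfolding l_r_N_def by simp
      finally show "N * r < (real j + 1) * pi" .
    qed
    then show ?thesis by auto
  qed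
  have t2: "((\<lambda>t. (2 * N + 1) * ln (sin t) - N * ln (- sin (N * t)))
      \<longlongrightarrow> (2 * N + 1) * ln (sin r) - N * ln (- sin (N * r))) (at_left r)"
    using rs rs2 by (intro tendsto_intros) auto
  have "filterlim (\<lambda>t. ((2 * N + 1) * ln (sin t) - N * ln (- sin (N * t))) + (N + 1) * (- ln (- sin ((N + 1) * t))))
     at_top (at_left r)"
    by (rule filterlim_tendsto_add_at_top[OF t2 f4])
  moreover have "(\<lambda>t. ((2 * N + 1) * ln (sin t) - N * ln (- sin (N * t))) + (N + 1) * (- ln (- sin ((N + 1) * t)))) = MM n"
    by (rule ext) (simp add: MM_def l_r_N_def)
  ultimately show ?thesis by (simp add: l_r_N_def)
qed

lemma MM_count:
  assumes n: "n \<ge> 1" and j: "j < n" "odd j" and ne: "MM n (tau n j) \<noteq> C"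
  shows "finite {t. real j * pi / real n < t \<and> t < (real j + 1) * pi / (real n + 1) \<and> MM n t = C} \<and>
         card {t. real j * pi / real n < t \<and> t < (real j + 1) * pi / (real n + 1) \<and> MM n t = C}
           = (if MM n (tau n j) < C then 2 else 0)"
proof -
  define l r where "l = real j * pi / real n" "r = (real j + 1) * pi / (real n + 1)"
  have j1: "1 \<le> j" using j by (cases j) auto
  have tm: "l < tau n j" "tau n j < r" using tau_mid[OF n j1 j(1)] by (simp_all add: l_r_def)
  have set_eq: "{t. real j * pi / real n < t \<and> t < (real j + 1) * pi / (real n + 1) \<and> MM n t = C}
      = {x \<in> {l<..<r}. MM n x = C}" by (auto simp: l_r_def)
  have sgn: "sin t > 0" "sin (real n * t) < 0" "sin ((real n + 1) * t) < 0" if "l < t" "t < r" for t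
    using sign_J(3)[OF n j(1)] odd_J[OF n j] that by (auto simp: l_r_def)
  have der: "(MM n has_real_derivative DD n t) (at t)" if "l < t" "t < r" for t
    using MM_deriv[OF n sgn[OF that]] .
  have cont: "continuous_on {l<..<r} (MM n)"
  proof (rule continuous_at_imp_continuous_on, rule ballI)
    fix x assume "x \<in> {l<..<r}"
    then show "isCont (MM n) x" using der[of x] DERIV_isCont by auto
  qed
  have psil: "psi n j \<le> l" using psi_lt_left[OF j1 j(1)] by (simp add: l_r_def)
  have psir: "r \<le> psi n (Suc j)" using right_lt_psi[of j n] by (simp add: l_r_def)
  have ggmono: "gg n x < gg n y" if "l \<le> x" "x < y" "y \<le> r" for x y
    using gg_mono[OF n _ _ that(2), of j] j psil psir that by simp
  have gt0: "gg n (tau n j) = 0" using tau_mid(3)[OF n j1 j(1)] .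
  have val: "finite {x \<in> {l<..<r}. MM n x = C} \<and> card {x \<in> {l<..<r}. MM n x = C} = (if MM n (tau n j) < C then 2 else 0)"
  proof (rule valley[where m = "tau n j"])
    show "z \<in> {l<..<r}" if "x \<in> {l<..<r}" "y \<in> {l<..<r}" "x \<le> z" "z \<le> y" for x y z
      using that by auto
    show "tau n j \<in> {l<..<r}" using tm by auto
    show "continuous_on {l<..<r} (MM n)" by (rule cont)
    show "MM n y < MM n x" if "x \<in> {l<..<r}" "x < y" "y \<le> tau n j" for x y
    proof (rule DERIV_neg_imp_decreasing_open[OF that(2)])
      fix z assume z: "x < z" "z < y"
      then have zz: "l < z" "z < r" "z < tau n j" using that tm by auto
      have "gg n z < 0" using ggmono[of z "tau n j"] zz tm gt0 by simp
      then have "DD n z < 0" using DD_sign(1)[OF n sgn[OF zz(1,2)]] by simp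
      then show "\<exists>d. (MM n has_real_derivative d) (at z) \<and> d < 0" using der[OF zz(1,2)] by blast
    next
      show "continuous_on {x..y} (MM n)" by (rule continuous_on_subset[OF cont]) (use that tm in auto)
    qed
    show "MM n x < MM n y" if "tau n j \<le> x" "x < y" "y \<in> {l<..<r}" for x y
    proof (rule DERIV_pos_imp_increasing_open[OF that(2)])
      fix z assume z: "x < z" "z < y"
      then have zz: "l < z" "z < r" "tau n j < z" using that tm by auto
      have "gg n z > 0" using ggmono[of "tau n j" z] zz tm gt0 by simp
      then have "DD n z > 0" using DD_sign(2)[OF n sgn[OF zz(1,2)]] by simp
      then show "\<exists>d. (MM n has_real_derivative d) (at z) \<and> d > 0" using der[OF zz(1,2)] by blast
    next
      show "continuous_on {x..y} (MM n)" by (rule continuous_on_subset[OF cont]) (use that tm in auto)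
    qed
    show "\<exists>x\<in>{l<..<r}. x < tau n j \<and> MM n x > D" for D
    proof -
      have "eventually (\<lambda>x. D < MM n x) (at_right l)"
        using MM_lim_left[OF n j] unfolding filterlim_at_top_dense l_r_def by blast
      then obtain b where b: "b > l" "\<And>y. l < y \<Longrightarrow> y < b \<Longrightarrow> D < MM n y"
        unfolding eventually_at_right_field by blast
      define y where "y = (l + min b (tau n j)) / 2"
      have "l < y" "y < b" "y < tau n j" using b tm by (auto simp: y_def)
      then show ?thesis using b tm by (intro bexI[of _ y]) auto
    qed
    show "\<exists>x\<in>{l<..<r}. x > tau n j \<and> MM n x > D" for D
    proof -
      have "eventually (\<lambda>x. D < MM n x) (at_left r)"
        using MM_lim_right[OF n j] unfolding filterlim_at_top_dense l_r_def by blast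
      then obtain b where b: "b < r" "\<And>y. b < y \<Longrightarrow> y < r \<Longrightarrow> D < MM n y"
        unfolding eventually_at_left_field by blast
      define y where "y = (r + max b (tau n j)) / 2"
      have "y < r" "b < y" "tau n j < y" using b tm by (auto simp: y_def)
      then show ?thesis using b tm by (intro bexI[of _ y]) auto
    qed
    show "MM n (tau n j) \<noteq> C" by (rule ne)
  qed
  then show ?thesis unfolding set_eq .
qed

lemma phi_circ:
  assumes n: "n \<ge> 1"
  shows "Re (phi n (exp (Complex 0 t))) = cos ((real n + 1) * t) / (real n + 1) - cos (real n * t) / real n"
    "Im (phi n (exp (Complex 0 t))) = gg n t"
  unfolding phi_polar[OF n] gg_def by simp_all

lemma re_phi_tau:
  assumes n: "n \<ge> 1" and g: "gg n t = 0"
  shows "Re (phi n (exp (Complex 0 t))) * sin ((real n + 1) * t) = - sin t / real n"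
proof -
  define N sA sB cA cB where "N = real n" "sA = sin (N * t)" "sB = sin ((N + 1) * t)" "cA = cos (N * t)" "cB = cos ((N + 1) * t)"
  have N: "N \<ge> 1" using n by (simp add: N_sA_sB_cA_cB_def)
  have sub: "sin t = sB * cA - cB * sA"
  proof -
    have "t = (N + 1) * t - N * t" by (simp add: algebra_simps)
    then have "sin t = sin ((N + 1) * t - N * t)" by simp
    then show ?thesis unfolding N_sA_sB_cA_cB_def sin_diff by simp
  qed
  have q: "sB / (N + 1) = sA / N" using g unfolding gg_def N_sA_sB_cA_cB_def by simp
  have "Re (phi n (exp (Complex 0 t))) * sB = cB * (sB / (N + 1)) - cA * sB / N"
    unfolding phi_circ[OF n] N_sA_sB_cA_cB_def by (simp add: field_simps)
  also have "\<dots> = cB * (sA / N) - cA * sB / N" by (simp only: q)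
  also have "\<dots> = - (sB * cA - cB * sA) / N" using N by (simp add: field_simps)
  finally show ?thesis unfolding sub[symmetric] by (simp add: N_sA_sB_cA_cB_def)
qed

lemma tau_even_neg:
  assumes n: "n \<ge> 1" and j: "1 \<le> j" "j < n" "even j"
  shows "Re (phi n (exp (Complex 0 (tau n j)))) < 0"
proof -
  let ?t = "tau n j"
  have tm: "real j * pi / real n < ?t" "?t < (real j + 1) * pi / (real n + 1)" using tau_mid[OF n j(1,2)] by auto
  have sB: "sin ((real n + 1) * ?t) > 0" using sign_J(2)[OF n j(2) tm] j(3) by simp
  have st: "sin ?t > 0" using sign_J(3)[OF n j(2) tm] .
  have e: "Re (phi n (exp (Complex 0 ?t))) * sin ((real n + 1) * ?t) = - sin ?t / real n"
    using re_phi_tau[OF n tau_mid(3)[OF n j(1,2)]] .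
  have "- sin ?t / real n < 0" using st n by (simp add: divide_pos_pos)
  then have "Re (phi n (exp (Complex 0 ?t))) * sin ((real n + 1) * ?t) < 0" using e by simp
  then show ?thesis using sB by (simp add: mult_less_0_iff)
qed

lemma tau_odd:
  assumes n: "n \<ge> 1" and j: "j < n" "odd j"
  shows "Re (phi n (exp (Complex 0 (tau n j)))) > 0"
    "MM n (tau n j) = CC n (Re (phi n (exp (Complex 0 (tau n j)))))"
proof -
  let ?t = "tau n j"
  let ?v = "Re (phi n (exp (Complex 0 ?t)))"
  have j1: "1 \<le> j" using j by (cases j) auto
  have tm: "real j * pi / real n < ?t" "?t < (real j + 1) * pi / (real n + 1)" using tau_mid[OF n j1 j(1)] by auto
  have sB: "sin ((real n + 1) * ?t) < 0" using odd_J(2)[OF n j tm] .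
  have st: "sin ?t > 0" using sign_J(3)[OF n j(1) tm] .
  have g: "gg n ?t = 0" using tau_mid(3)[OF n j1 j(1)] .
  have e: "?v * sin ((real n + 1) * ?t) = - sin ?t / real n"
    using re_phi_tau[OF n g] .
  have "- sin ?t / real n < 0" using st n by (simp add: divide_pos_pos)
  then have "?v * sin ((real n + 1) * ?t) < 0" using e by simp
  then show vp: "?v > 0" using sB by (simp add: mult_less_0_iff)
  have "phi n (exp (Complex 0 ?t)) = of_real ?v"
    using phi_circ(2)[OF n, of ?t] g by (simp add: complex_eq_iff)
  then have "sin (real n * ?t) < 0 \<and> sin ((real n + 1) * ?t) < 0 \<and> 0 = rho0 n ?t \<and> MM n ?t = CC n ?v"
    using polar_zero[OF n vp, where r=0 and t="tau n j"] sign_J(4,5)[OF n j(1) tm] by blast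
  then show "MM n ?t = CC n ?v" by blast
qed

lemma CC_less:
  assumes "n \<ge> 1" "x > 0" "y > 0"
  shows "CC n x < CC n y \<longleftrightarrow> x < y"
  using assms unfolding CC_def by simp

lemma phi_real: "phi n (of_real x) = of_real (x ^ (n+1) / (real n + 1) - inverse (x ^ n) / real n)"
  unfolding phi_def by simp

definition pp :: "nat \<Rightarrow> real \<Rightarrow> real" where
  "pp n x = x ^ (n+1) / (real n + 1) - inverse (x ^ n) / real n"

definition hh :: "nat \<Rightarrow> real \<Rightarrow> real" where
  "hh n x = x ^ (n+1) / (real n + 1) + inverse (x ^ n) / real n"

lemma pp_mono:
  assumes n: "n \<ge> 1" and xy: "0 < x" "x < y"
  shows "pp n x < pp n y"
proof -
  have "x ^ (n+1) < y ^ (n+1)" using xy by (intro power_strict_mono) auto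
  moreover have "inverse (y ^ n) < inverse (x ^ n)"
    using xy n by (intro less_imp_inverse_less power_strict_mono) auto
  ultimately show ?thesis unfolding pp_def using n
    by (intro diff_strict_mono divide_strict_right_mono) auto
qed

lemma pos_real_zero:
  assumes n: "n \<ge> 1" and c: "0 < c" "c < 1/2"
  shows "\<exists>!x. 0 < x \<and> pp n x = c"
proof -
  have N: "real n \<ge> 1" using n by simp
  have p1: "pp n 1 < c"
  proof -
    have "1 / (real n + 1) < 1 / real n" using N by (simp add: frac_less2)
    then show ?thesis using c unfolding pp_def by simp
  qed
  have p2: "c < pp n 2"
  proof -
    have "real n + 1 < 2 ^ (n+1)"
    proof -
      have "n + 1 < 2 ^ (n+1)" by (rule less_exp)
      then have "real (n + 1) < real (2 ^ (n+1))" by (simp only: of_nat_less_iff)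
      then show ?thesis by simp
    qed
    then have a: "1 < 2 ^ (n+1) / (real n + 1)" by simp
    have "(2::real) \<le> 2 ^ n" using n by (metis power_one_right power_increasing one_le_numeral)
    then have "1 * 2 \<le> real n * 2 ^ n" using N by (intro mult_mono) auto
    then have b: "inverse (2 ^ n) / real n \<le> 1/2" using N by (simp add: field_simps)
    show ?thesis unfolding pp_def using a b c by linarith
  qed
  have cont: "continuous_on {1..2} (pp n)"
    unfolding pp_def[abs_def] using n by (intro continuous_intros) auto
  obtain x where x: "1 \<le> x" "x \<le> 2" "pp n x = c"
    using IVT'[of "pp n" 1 c 2] p1 p2 cont by auto
  show ?thesis
  proof (rule ex1I[of _ x])
    show "0 < x \<and> pp n x = c" using x by simp
    fix y assume y: "0 < y \<and> pp n y = c"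
    show "y = x"
    proof (rule ccontr)
      assume "y \<noteq> x"
      then consider "y < x" | "x < y" by linarith
      then show False
        using pp_mono[OF n, of y x] pp_mono[OF n, of x y] x y by cases auto
    qed
  qed
qed

lemma hh_deriv:
  assumes n: "n \<ge> 1" and x: "x > 0"
  shows "(hh n has_real_derivative (x ^ n - inverse (x ^ (n+1)))) (at x)"
proof -
  obtain m where m: "n = Suc m" using n by (cases n) auto
  have x0: "x \<noteq> 0" and xm: "x ^ m \<noteq> 0" using x by auto
  have d1: "((\<lambda>x. x ^ (n+1)) has_real_derivative real (n+1) * x ^ n) (at x)"
    using DERIV_pow[of "n+1" x] by simp
  have d1': "((\<lambda>x. x ^ (n+1) / (real n + 1)) has_real_derivative x ^ n) (at x)"
  proof -
    have e: "real (n+1) * x ^ n / (real n + 1) = x ^ n"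
    proof -
      have p: "real n + 1 \<noteq> 0" by (simp add: add_nonneg_pos)
      have "real (n+1) * x ^ n / (real n + 1) = (real n + 1) * x ^ n / (real n + 1)" by (simp only: of_nat_add of_nat_1)
      also have "\<dots> = x ^ n" using p by (rule nonzero_mult_div_cancel_left)
      finally show ?thesis .
    qed
    show ?thesis using DERIV_cdivide[OF d1, of "real n + 1"] unfolding e .
  qed
  have d2: "((\<lambda>x. x ^ n) has_real_derivative real n * x ^ m) (at x)"
    using DERIV_pow[of n x] by (simp add: m)
  have d3: "((\<lambda>x. inverse (x ^ n)) has_real_derivative - (real n * x ^ m * (inverse (x ^ n) * inverse (x ^ n)))) (at x)"
    using DERIV_inverse_fun[OF d2] x0 by simp
  have d3': "((\<lambda>x. inverse (x ^ n) / real n) has_real_derivative - (real n * x ^ m * (inverse (x ^ n) * inverse (x ^ n))) / real n) (at x)"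
    using DERIV_cdivide[OF d3, of "real n"] by simp
  have A: "x ^ (n+1) * x ^ m = x ^ n * x ^ n" by (simp add: m flip: power_add)
  have xn: "x ^ n \<noteq> 0" "x ^ (n+1) \<noteq> 0" using x0 by auto
  have B: "x ^ m * (inverse (x ^ n) * inverse (x ^ n)) = inverse (x ^ (n+1))"
  proof -
    have "x ^ m * (inverse (x ^ n) * inverse (x ^ n)) = x ^ m / (x ^ n * x ^ n)" by (simp add: field_simps)
    also have "\<dots> = x ^ m / (x ^ (n+1) * x ^ m)" unfolding A ..
    also have "\<dots> = inverse (x ^ (n+1))" using xm xn by (simp add: field_simps)
    finally show ?thesis .
  qed
  have eq: "- (real n * x ^ m * (inverse (x ^ n) * inverse (x ^ n))) / real n = - inverse (x ^ (n+1))"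
  proof -
    have "real n \<noteq> 0" using n by simp
    then have "- (real n * x ^ m * (inverse (x ^ n) * inverse (x ^ n))) / real n = - (x ^ m * (inverse (x ^ n) * inverse (x ^ n)))"
      by (simp add: mult.assoc)
    then show ?thesis unfolding B .
  qed
  have "(hh n has_real_derivative (x ^ n + - inverse (x ^ (n+1)))) (at x)"
    unfolding hh_def[abs_def] using DERIV_add[OF d1' d3'] unfolding eq by simp
  then show ?thesis by simp
qed

lemma hh_count:
  assumes n: "n \<ge> 1" and ne: "hh n 1 \<noteq> c"
  shows "finite {x \<in> {0<..}. hh n x = c} \<and> card {x \<in> {0<..}. hh n x = c} = (if hh n 1 < c then 2 else 0)"
proof (rule valley[where m = 1])
  obtain m where m: "n = Suc m" using n by (cases n) auto
  have N: "real n \<ge> 1" using n by simp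
  show "z \<in> {0<..}" if "x \<in> {0<..}" "y \<in> {0<..}" "x \<le> z" "z \<le> y" for x y z :: real
    using that by auto
  show "(1::real) \<in> {0<..}" by simp
  show cont: "continuous_on {0<..} (hh n)"
  proof (rule continuous_at_imp_continuous_on, rule ballI)
    fix x :: real assume "x \<in> {0<..}"
    then show "isCont (hh n) x" using hh_deriv[OF n, of x] DERIV_isCont by auto
  qed
  show "hh n y < hh n x" if "x \<in> {0<..}" "x < y" "y \<le> 1" for x y
  proof (rule DERIV_neg_imp_decreasing_open[OF that(2)])
    fix z assume z: "x < z" "z < y"
    then have z0: "0 < z" "z < 1" using that by auto
    have "z ^ n < 1" unfolding m using z0 by (rule power_Suc_less_one)
    moreover have "1 < inverse (z ^ (n+1))"
    proof -
      have "z ^ Suc n < 1" using z0 by (rule power_Suc_less_one)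
      then show ?thesis using z0 by (intro one_less_inverse) auto
    qed
    ultimately have "z ^ n - inverse (z ^ (n+1)) < 0" by simp
    then show "\<exists>d. (hh n has_real_derivative d) (at z) \<and> d < 0" using hh_deriv[OF n z0(1)] by blast
  next
    show "continuous_on {x..y} (hh n)" by (rule continuous_on_subset[OF cont]) (use that in auto)
  qed
  show "hh n x < hh n y" if "1 \<le> x" "x < y" "y \<in> {0<..}" for x y
  proof (rule DERIV_pos_imp_increasing_open[OF that(2)])
    fix z assume z: "x < z" "z < y"
    then have z0: "0 < z" "1 < z" using that by auto
    have "1 < z ^ n" using z0 n by (intro one_less_power) auto
    moreover have "inverse (z ^ (n+1)) < 1"
    proof -
      have "1 < z ^ (n+1)" using z0 by (intro one_less_power) auto
      then show ?thesis using inverse_less_1_iff[of "z ^ (n+1)"] by (simp only:) simp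
    qed
    ultimately have "z ^ n - inverse (z ^ (n+1)) > 0" by simp
    then show "\<exists>d. (hh n has_real_derivative d) (at z) \<and> d > 0" using hh_deriv[OF n z0(1)] by blast
  next
    show "continuous_on {x..y} (hh n)" by (rule continuous_on_subset[OF cont]) (use that in auto)
  qed
  show "\<exists>x\<in>{0<..}. x < 1 \<and> hh n x > D" for D
  proof -
    define K where "K = real n * (\<bar>D\<bar> + 1) + 1"
    have "real n * (\<bar>D\<bar> + 1) > 0" using N by (intro mult_pos_pos) auto
    then have K: "K > 1" unfolding K_def by simp
    define x where "x = inverse K"
    have x: "0 < x" "x < 1" using K inverse_less_1_iff[of K] by (auto simp: x_def)
    have "x ^ n \<le> x ^ 1" using x n by (intro power_decreasing) auto
    then have "x ^ n \<le> x" by simp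
    then have "inverse x \<le> inverse (x ^ n)" using x by (intro le_imp_inverse_le) auto
    then have "K \<le> inverse (x ^ n)" by (simp add: x_def)
    then have "K / real n \<le> inverse (x ^ n) / real n" using N by (simp add: divide_right_mono)
    moreover have "D < K / real n"
    proof -
      have "K / real n = (\<bar>D\<bar> + 1) + 1 / real n" using N unfolding K_def by (simp add: field_simps)
      moreover have "0 < 1 / real n" using N by simp
      ultimately show ?thesis using abs_ge_self[of D] by linarith
    qed
    moreover have "0 \<le> x ^ (n+1) / (real n + 1)" using x by simp
    ultimately have "D < hh n x" unfolding hh_def by linarith
    then show ?thesis using x by auto
  qed
  show "\<exists>x\<in>{0<..}. x > 1 \<and> hh n x > D" for D
  proof -
    define y where "y = (real n + 1) * (\<bar>D\<bar> + 1) + 1"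
    have "(real n + 1) * (\<bar>D\<bar> + 1) > 0" by (intro mult_pos_pos) auto
    then have y: "y > 1" unfolding y_def by simp
    have "y ^ 1 \<le> y ^ (n+1)" using y by (intro power_increasing) auto
    then have "y \<le> y ^ (n+1)" by simp
    then have "y / (real n + 1) \<le> y ^ (n+1) / (real n + 1)" by (simp add: divide_right_mono)
    moreover have "D < y / (real n + 1)"
    proof -
      have p: "real n + 1 > 0" by simp
      have "y / (real n + 1) = (\<bar>D\<bar> + 1) + 1 / (real n + 1)" using p unfolding y_def by (simp add: field_simps)
      moreover have "0 < 1 / (real n + 1)" using p by simp
      ultimately show ?thesis using abs_ge_self[of D] by linarith
    qed
    moreover have "0 \<le> inverse (y ^ n) / real n" using y by simp
    ultimately have "D < hh n y" unfolding hh_def by linarith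
    then show ?thesis using y by auto
  qed
  show "hh n 1 \<noteq> c" by (rule ne)
qed

lemma zero_iff_phi:
  assumes "a > 1"
  shows "f_a n a z = 0 \<longleftrightarrow> phi n z = of_real (1 / (a + 1))"
  unfolding f_zero_iff[OF assms] by (auto simp: complex_eq_iff)

lemma Zp_card:
  assumes n: "n \<ge> 1" and a: "a > 1"
  shows "finite {z. z \<noteq> 0 \<and> f_a n a z = 0 \<and> Im z = 0 \<and> Re z > 0} \<and>
         card {z. z \<noteq> 0 \<and> f_a n a z = 0 \<and> Im z = 0 \<and> Re z > 0} = 1"
proof -
  define c where "c = 1 / (a + 1)"
  have c: "0 < c" "c < 1/2" using a by (auto simp: c_def field_simps)
  obtain x0 where x0: "0 < x0" "pp n x0 = c" and uq: "\<And>y. 0 < y \<Longrightarrow> pp n y = c \<Longrightarrow> y = x0"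
    using pos_real_zero[OF n c] by metis
  have pr: "phi n (of_real x) = of_real (pp n x)" for x
    unfolding phi_real pp_def ..
  have "{z. z \<noteq> 0 \<and> f_a n a z = 0 \<and> Im z = 0 \<and> Re z > 0} = {of_real x0}"
  proof (intro equalityI subsetI)
    fix z assume "z \<in> {z. z \<noteq> 0 \<and> f_a n a z = 0 \<and> Im z = 0 \<and> Re z > 0}"
    then have z: "f_a n a z = 0" "Im z = 0" "Re z > 0" by auto
    have ze: "z = of_real (Re z)" using z(2) by (simp add: complex_eq_iff)
    have "phi n (of_real (Re z)) = of_real c" using z(1) zero_iff_phi[OF a] ze c_def by metis
    then have "pp n (Re z) = c" unfolding pr by simp
    then have "Re z = x0" using uq z(3) by blast
    then show "z \<in> {of_real x0}" using ze by simp
  next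
    fix z assume "z \<in> {complex_of_real x0}"
    then have z: "z = of_real x0" by simp
    have "phi n z = of_real c" unfolding z pr x0(2) ..
    then have "f_a n a z = 0" using zero_iff_phi[OF a] c_def by simp
    then show "z \<in> {z. z \<noteq> 0 \<and> f_a n a z = 0 \<and> Im z = 0 \<and> Re z > 0}" using z x0 by simp
  qed
  then show ?thesis by simp
qed

lemma phi_negreal:
  "phi n (of_real (- x)) = of_real (if odd n then hh n x else - hh n x)"
  unfolding phi_real hh_def by (auto simp: power_minus_odd power_minus_even)

lemma Zn_even:
  assumes n: "n \<ge> 1" and a: "a > 1" and ev: "even n"
  shows "{z. z \<noteq> 0 \<and> f_a n a z = 0 \<and> Im z = 0 \<and> Re z < 0} = {}"
proof -
  have False if z: "z \<noteq> 0" "f_a n a z = 0" "Im z = 0" "Re z < 0" for z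
  proof -
    define x where "x = - Re z"
    have x: "x > 0" using z by (simp add: x_def)
    have ze: "z = of_real (- x)" using z(3) by (simp add: complex_eq_iff x_def)
    have p1: "phi n z = of_real (1 / (a + 1))" using z(2) zero_iff_phi[OF a] by simp
    have p2: "phi n z = of_real (- hh n x)" unfolding ze phi_negreal using ev by simp
    have "(of_real (- hh n x) :: complex) = of_real (1 / (a + 1))" using p1 p2 by simp
    then have "- hh n x = 1 / (a + 1)" by (simp only: of_real_eq_iff)
    moreover have "hh n x > 0" unfolding hh_def using x n by (intro add_pos_pos divide_pos_pos) auto
    moreover have "1 / (a + 1) > 0" using a by simp
    ultimately show False by simp
  qed
  then show ?thesis by blast
qed

lemma Zn_odd:
  assumes n: "n \<ge> 1" and a: "a > 1" and od: "odd n" and ne: "hh n 1 \<noteq> 1 / (a + 1)"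
  shows "finite {z. z \<noteq> 0 \<and> f_a n a z = 0 \<and> Im z = 0 \<and> Re z < 0} \<and>
     card {z. z \<noteq> 0 \<and> f_a n a z = 0 \<and> Im z = 0 \<and> Re z < 0} = (if hh n 1 < 1 / (a + 1) then 2 else 0)"
proof -
  define c where "c = 1 / (a + 1)"
  have eq: "{z. z \<noteq> 0 \<and> f_a n a z = 0 \<and> Im z = 0 \<and> Re z < 0} = (\<lambda>x. of_real (- x)) ` {x \<in> {0<..}. hh n x = c}"
  proof (intro equalityI subsetI)
    fix z assume "z \<in> {z. z \<noteq> 0 \<and> f_a n a z = 0 \<and> Im z = 0 \<and> Re z < 0}"
    then have z: "f_a n a z = 0" "Im z = 0" "Re z < 0" by auto
    define x where "x = - Re z"
    have x: "x > 0" using z by (simp add: x_def)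
    have ze: "z = of_real (- x)" using z(2) by (simp add: complex_eq_iff x_def)
    have "phi n z = of_real c" using z(1) zero_iff_phi[OF a] c_def by simp
    then have "hh n x = c" unfolding ze phi_negreal using od by simp
    then show "z \<in> (\<lambda>x. of_real (- x)) ` {x \<in> {0<..}. hh n x = c}" using x ze by auto
  next
    fix z assume "z \<in> (\<lambda>x. complex_of_real (- x)) ` {x \<in> {0<..}. hh n x = c}"
    then obtain x where x: "x > 0" "hh n x = c" "z = of_real (- x)" by auto
    have "phi n z = of_real c" unfolding x(3) phi_negreal using od x(2) by simp
    then have "f_a n a z = 0" using zero_iff_phi[OF a] c_def by simp
    then show "z \<in> {z. z \<noteq> 0 \<and> f_a n a z = 0 \<and> Im z = 0 \<and> Re z < 0}" using x by simp
  qed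
  have inj: "inj_on (\<lambda>x. complex_of_real (- x)) {x \<in> {0<..}. hh n x = c}"
    by (rule inj_onI) simp
  have hc: "finite {x \<in> {0<..}. hh n x = c} \<and> card {x \<in> {0<..}. hh n x = c} = (if hh n 1 < c then 2 else 0)"
    using hh_count[OF n] ne c_def by simp
  show ?thesis unfolding eq using hc card_image[OF inj] c_def by simp
qed

lemma Zu_card:
  assumes n: "n \<ge> 1" and a: "a > 1"
    and ne: "\<And>j. j < n \<Longrightarrow> odd j \<Longrightarrow> MM n (tau n j) \<noteq> CC n (1 / (a + 1))"
  shows "finite {z. z \<noteq> 0 \<and> f_a n a z = 0 \<and> Im z > 0} \<and>
     card {z. z \<noteq> 0 \<and> f_a n a z = 0 \<and> Im z > 0} =
       (\<Sum>j\<in>{j. j < n \<and> odd j}. (if MM n (tau n j) < CC n (1 / (a + 1)) then 2 else 0))"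
proof -
  define c where "c = 1 / (a + 1)"
  have c: "c > 0" using a by (simp add: c_def)
  define Od where "Od = {j. j < n \<and> odd j}"
  define Th where "Th = (\<lambda>j. {t. real j * pi / real n < t \<and> t < (real j + 1) * pi / (real n + 1) \<and> MM n t = CC n c})"
  define U where "U = (\<Union>j\<in>Od. Th j)"
  define Phi where "Phi = (\<lambda>t. exp (Complex (rho0 n t) t))"
  have fO: "finite Od" unfolding Od_def by simp
  have cnt: "finite (Th j) \<and> card (Th j) = (if MM n (tau n j) < CC n c then 2 else 0)" if "j \<in> Od" for j
    using MM_count[OF n, of j "CC n c"] ne[of j] that unfolding Od_def Th_def c_def by auto
  have disj: "Th i \<inter> Th j = {}" if "i \<in> Od" "j \<in> Od" "i \<noteq> j" for i j
  proof -
    have False if ij: "i < j" "t \<in> Th i" "t \<in> Th j" for i j t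
      using J_disjoint[OF n ij(1)] ij unfolding Th_def by auto
    then show ?thesis using that by (metis disjoint_iff linorder_neqE_nat)
  qed
  have cardU: "card U = (\<Sum>j\<in>Od. card (Th j))"
    unfolding U_def by (rule card_UN_disjoint[OF fO]) (use cnt disj in auto)
  have finU: "finite U" unfolding U_def using fO cnt by auto
  have Urange: "0 < t \<and> t < pi" if "t \<in> U" for t
    using that sign_J(4,5)[OF n] unfolding U_def Od_def Th_def by blast
  have eq: "{z. z \<noteq> 0 \<and> f_a n a z = 0 \<and> Im z > 0} = Phi ` U"
  proof (intro equalityI subsetI)
    fix z assume "z \<in> {z. z \<noteq> 0 \<and> f_a n a z = 0 \<and> Im z > 0}"
    then have z: "z \<noteq> 0" "f_a n a z = 0" "Im z > 0" by auto
    define w where "w = Ln z"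
    have "Complex (Re w) (Im w) = w" by simp
    then have zw: "z = exp (Complex (Re w) (Im w))" using z(1) exp_Ln[of z] by (simp add: w_def)
    have t: "0 < Im w" "Im w < pi" using Im_Ln_pos_lt[OF z(1)] z(3) by (auto simp: w_def)
    have phz: "phi n z = of_real c" using z(2) zero_iff_phi[OF a] c_def by simp
    have pe: "phi n (exp (Complex (Re w) (Im w))) = of_real c" using phz unfolding zw .
    have pz: "sin (real n * Im w) < 0 \<and> sin ((real n + 1) * Im w) < 0 \<and> Re w = rho0 n (Im w) \<and> MM n (Im w) = CC n c"
      by (rule iffD1[OF polar_zero[OF n c t(1) t(2), of "Re w"] pe])
    then obtain j where j: "j < n" "odd j" "real j * pi / real n < Im w" "Im w < (real j + 1) * pi / (real n + 1)"
      using J_of_neg[OF n t] by blast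
    have "Im w \<in> U" unfolding U_def Od_def Th_def using j pz by blast
    moreover have "z = Phi (Im w)" unfolding Phi_def using zw pz by metis
    ultimately show "z \<in> Phi ` U" by blast
  next
    fix z assume "z \<in> Phi ` U"
    then obtain t j where tU: "t \<in> U" and z: "z = Phi t" and j: "j < n" "odd j"
      and tJ: "real j * pi / real n < t" "t < (real j + 1) * pi / (real n + 1)" and tM: "MM n t = CC n c"
      unfolding U_def Od_def Th_def by blast
    have t: "0 < t" "t < pi" using Urange[OF tU] by auto
    have "phi n z = of_real c"
      unfolding z Phi_def using polar_zero[OF n c t, where r = "rho0 n t"] odd_J[OF n j tJ] tM by simp
    then have "f_a n a z = 0" using zero_iff_phi[OF a] c_def by simp
    moreover have "Im z > 0"
    proof -
      have "Im z = exp (rho0 n t) * sin t" unfolding z Phi_def by (simp add: exp_Complex)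
      then show ?thesis using sign_J(3)[OF n j(1) tJ] by simp
    qed
    moreover have "z \<noteq> 0" unfolding z Phi_def by simp
    ultimately show "z \<in> {z. z \<noteq> 0 \<and> f_a n a z = 0 \<and> Im z > 0}" by simp
  qed
  have inj: "inj_on Phi U"
  proof (rule inj_onI)
    fix s t assume st: "s \<in> U" "t \<in> U" "Phi s = Phi t"
    have "Ln (Phi s) = Complex (rho0 n s) s" unfolding Phi_def using Urange[OF st(1)] by (intro Ln_exp) auto
    moreover have "Ln (Phi t) = Complex (rho0 n t) t" unfolding Phi_def using Urange[OF st(2)] by (intro Ln_exp) auto
    ultimately have "Complex (rho0 n s) s = Complex (rho0 n t) t" using st(3) by metis
    then show "s = t" by simp
  qed
  have "(\<Sum>j\<in>Od. card (Th j)) = (\<Sum>j\<in>Od. (if MM n (tau n j) < CC n c then 2 else 0))"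
    by (rule sum.cong) (use cnt in auto)
  then have "card (Phi ` U) = (\<Sum>j\<in>Od. (if MM n (tau n j) < CC n c then 2 else 0))"
    using card_image[OF inj] cardU by simp
  moreover have "finite (Phi ` U)" using finU by simp
  ultimately show ?thesis unfolding eq c_def[symmetric] Od_def[symmetric] by simp
qed

lemma Zl_eq:
  "{z. z \<noteq> 0 \<and> f_a n a z = 0 \<and> Im z < 0} = cnj ` {z. z \<noteq> 0 \<and> f_a n a z = 0 \<and> Im z > 0}"
proof (intro equalityI subsetI)
  fix z assume z: "z \<in> {z. z \<noteq> 0 \<and> f_a n a z = 0 \<and> Im z < 0}"
  have "f_a n a (cnj z) = 0" using z by (simp add: f_cnj)
  then have "cnj z \<in> {z. z \<noteq> 0 \<and> f_a n a z = 0 \<and> Im z > 0}" using z by simp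
  then show "z \<in> cnj ` {z. z \<noteq> 0 \<and> f_a n a z = 0 \<and> Im z > 0}" by (metis complex_cnj_cnj image_eqI)
next
  fix z assume "z \<in> cnj ` {z. z \<noteq> 0 \<and> f_a n a z = 0 \<and> Im z > 0}"
  then obtain w where w: "w \<noteq> 0" "f_a n a w = 0" "Im w > 0" "z = cnj w" by auto
  have "f_a n a z = 0" using w by (simp add: f_cnj)
  then show "z \<in> {z. z \<noteq> 0 \<and> f_a n a z = 0 \<and> Im z < 0}" using w by simp
qed

lemma sum_ident:
  fixes e :: "nat \<Rightarrow> real"
  assumes ev: "\<And>i. i \<le> N \<Longrightarrow> even i \<Longrightarrow> e i = 1"
  shows "(\<Sum>j<N. (-1)^(j+1) * (e (Suc j) - e j)) =
     real N - 2 * (\<Sum>j\<in>{j. j < N \<and> odd j}. e j) - (if odd N then e N else 0)"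
  using ev
proof (induction N)
  case 0 then show ?case by simp
next
  case (Suc N)
  have IH: "(\<Sum>j<N. (-1)^(j+1) * (e (Suc j) - e j)) =
     real N - 2 * (\<Sum>j\<in>{j. j < N \<and> odd j}. e j) - (if odd N then e N else 0)"
    using Suc by auto
  have S: "{j. j < Suc N \<and> odd j} = (if odd N then insert N {j. j < N \<and> odd j} else {j. j < N \<and> odd j})"
    by (auto simp: less_Suc_eq)
  show ?case
  proof (cases "odd N")
    case True
    have eSN: "e (Suc N) = 1" using Suc.prems[of "Suc N"] True by simp
    have "(\<Sum>j\<in>{j. j < Suc N \<and> odd j}. e j) = e N + (\<Sum>j\<in>{j. j < N \<and> odd j}. e j)"
      unfolding S using True by (simp add: sum.insert)
    then show ?thesis using IH True eSN by (simp add: algebra_simps)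
  next
    case False
    have eN: "e N = 1" using Suc.prems[of N] False by simp
    have "(\<Sum>j\<in>{j. j < Suc N \<and> odd j}. e j) = (\<Sum>j\<in>{j. j < N \<and> odd j}. e j)"
      unfolding S using False by simp
    then show ?thesis using IH False eN by (simp add: algebra_simps)
  qed
qed

lemma norm_circ: "cmod (exp (Complex 0 t)) = 1"
  by (simp add: norm_exp_eq_Re)

lemma Re_f_of_phi: "Re (f_a n a z) < 0 \<longleftrightarrow> Re (phi n z) < 1 / (a + 1)" if "a > 1"
  using that unfolding Re_f by (simp add: field_simps)

theorem lemma1:
  fixes n :: nat and a :: real
  assumes "n \<ge> 4" and "a > 1"
    and "\<forall>z. cmod z = 1 \<longrightarrow> f_a n a z \<noteq> 0"
  shows "of_nat (card {z. z \<noteq> 0 \<and> f_a n a z = 0})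
         = 2 * (of_nat n - winding_number (f_a n a \<circ> circlepath 0 1) 0) + 1"
proof -
  have n: "n \<ge> 1" using assms(1) by simp
  have a: "a > 1" by fact
  have hyp: "\<forall>z. cmod z = 1 \<longrightarrow> f_a n a z \<noteq> 0" by fact
  define c where "c = 1 / (a + 1)"
  have c: "c > 0" using a by (simp add: c_def)
  define e where "e = (\<lambda>j. if Re (f_a n a (exp (Complex 0 (tau n j)))) < 0 then 1 else (0::real))"
  have W: "winding_number (f_a n a \<circ> circlepath 0 1) 0 = of_real (\<Sum>j<n. (-1)^(j+1) * (e (Suc j) - e j))"
    unfolding e_def by (rule W_formula[OF n a hyp])
  have fnz: "f_a n a (exp (Complex 0 t)) \<noteq> 0" for t using hyp norm_circ by blast
  have Imz: "Im (f_a n a (exp (Complex 0 (tau n j)))) = 0" if "j \<le> n" for j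
    unfolding Im_f_circ[OF n] using tau_zero[OF n that] by simp
  have Renz: "Re (f_a n a (exp (Complex 0 (tau n j)))) \<noteq> 0" if "j \<le> n" for j
    using fnz[of "tau n j"] Imz[OF that] by (auto simp: complex_eq_iff)
  have Nr: "real n \<ge> 1" using n by simp
  have ev: "e i = 1" if iv: "i \<le> n" "even i" for i
  proof -
    consider "i = 0" | "1 \<le> i \<and> i < n" | "i = n" using iv by linarith
    then show ?thesis
    proof cases
      case 1
      have "1 / (real n + 1) < 1 / real n" using Nr by (simp add: frac_less2)
      then have "Re (phi n (exp (Complex 0 0))) < 0" unfolding phi_circ(1)[OF n] by simp
      then have "Re (phi n (exp (Complex 0 (tau n i)))) < c" using 1 c by simp
      then show ?thesis unfolding e_def using Re_f_of_phi[OF a] c_def by simp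
    next
      case 2
      have "Re (phi n (exp (Complex 0 (tau n i)))) < 0" using tau_even_neg[OF n _ _ iv(2)] 2 by simp
      then have "Re (phi n (exp (Complex 0 (tau n i)))) < c" using c by linarith
      then show ?thesis unfolding e_def using Re_f_of_phi[OF a] c_def by simp
    next
      case 3
      have cn: "cos (real n * pi) = 1" using iv 3 by (simp add: cos_npi)
      have cn1: "cos ((real n + 1) * pi) = -1" using iv 3 cos_npi[of "Suc n"] by (simp add: add.commute)
      have p: "0 < 1 / (real n + 1)" "0 < 1 / real n" using Nr by simp_all
      have "Re (phi n (exp (Complex 0 pi))) = - (1 / (real n + 1)) - 1 / real n"
        unfolding phi_circ(1)[OF n] cn cn1 by simp
      then have "Re (phi n (exp (Complex 0 pi))) < 0" using p by linarith
      then have "Re (phi n (exp (Complex 0 (tau n i)))) < c" using c 3 n by simp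
      then show ?thesis unfolding e_def using Re_f_of_phi[OF a] c_def by simp
    qed
  qed
  have S: "(\<Sum>j<n. (-1)^(j+1) * (e (Suc j) - e j)) =
     real n - 2 * (\<Sum>j\<in>{j. j < n \<and> odd j}. e j) - (if odd n then e n else 0)"
    by (rule sum_ident) (use ev in auto)
  define Z where "Z = {z. z \<noteq> 0 \<and> f_a n a z = 0}"
  define Zp where "Zp = {z. z \<noteq> 0 \<and> f_a n a z = 0 \<and> Im z = 0 \<and> Re z > 0}"
  define Zn where "Zn = {z. z \<noteq> 0 \<and> f_a n a z = 0 \<and> Im z = 0 \<and> Re z < 0}"
  define Zu where "Zu = {z. z \<noteq> 0 \<and> f_a n a z = 0 \<and> Im z > 0}"
  define Zl where "Zl = {z. z \<noteq> 0 \<and> f_a n a z = 0 \<and> Im z < 0}"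
  have Zsplit: "Z = Zp \<union> Zn \<union> Zu \<union> Zl"
    unfolding Z_def Zp_def Zn_def Zu_def Zl_def by (auto simp: complex_eq_iff)
  have Zp: "finite Zp" "card Zp = 1" using Zp_card[OF n a] unfolding Zp_def by auto
  have Zn: "finite Zn" "real (card Zn) = (if odd n then 2 * e n else 0)"
  proof -
    have "finite Zn \<and> real (card Zn) = (if odd n then 2 * e n else 0)"
    proof (cases "odd n")
      case True
      have rp: "Re (phi n (exp (Complex 0 pi))) = hh n 1"
      proof -
        have cn: "cos (real n * pi) = -1" using True by (simp add: cos_npi)
        have cn1: "cos ((real n + 1) * pi) = 1" using True cos_npi[of "Suc n"] by (simp add: add.commute)
        show ?thesis unfolding phi_circ(1)[OF n] hh_def cn cn1 by simp
      qed
      have tn: "tau n n = pi" using n by simp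
      have "Re (f_a n a (exp (Complex 0 pi))) \<noteq> 0" using Renz[of n] tn by simp
      then have ne: "hh n 1 \<noteq> 1 / (a + 1)" unfolding Re_f rp using a by (auto simp: field_simps)
      have en: "e n = (if hh n 1 < 1 / (a + 1) then 1 else 0)"
        unfolding e_def tn using Re_f_of_phi[OF a, of n "exp (Complex 0 pi)"] rp by simp
      show ?thesis using Zn_odd[OF n a True ne] en True unfolding Zn_def by simp
    next
      case False
      then have "Zn = {}" using Zn_even[OF n a] unfolding Zn_def by simp
      then show ?thesis using False by simp
    qed
    then show "finite Zn" "real (card Zn) = (if odd n then 2 * e n else 0)" by auto
  qed
  have neMM: "MM n (tau n j) \<noteq> CC n (1 / (a + 1))" and ltMM: "MM n (tau n j) < CC n (1 / (a + 1)) \<longleftrightarrow> e j = 1"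
    if "j < n" "odd j" for j
  proof -
    let ?v = "Re (phi n (exp (Complex 0 (tau n j))))"
    have v: "?v > 0" "MM n (tau n j) = CC n ?v" using tau_odd[OF n that] by auto
    have "Re (f_a n a (exp (Complex 0 (tau n j)))) \<noteq> 0" using Renz[of j] that by simp
    then have vne: "?v \<noteq> c" unfolding Re_f c_def using a by (auto simp: field_simps)
    show "MM n (tau n j) \<noteq> CC n (1 / (a + 1))"
      using v vne CC_less[OF n v(1) c] CC_less[OF n c v(1)] unfolding c_def by auto
    show "MM n (tau n j) < CC n (1 / (a + 1)) \<longleftrightarrow> e j = 1"
      unfolding v(2) using CC_less[OF n v(1) c] Re_f_of_phi[OF a] unfolding e_def c_def by simp
  qed
  have Zu0: "finite Zu \<and> card Zu = (\<Sum>j\<in>{j. j < n \<and> odd j}. (if MM n (tau n j) < CC n (1 / (a + 1)) then 2 else 0))"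
    using Zu_card[OF n a neMM] unfolding Zu_def by blast
  have Zu: "finite Zu" "real (card Zu) = (\<Sum>j\<in>{j. j < n \<and> odd j}. 2 * e j)"
  proof -
    show "finite Zu" using Zu0 by simp
    have "real (card Zu) = (\<Sum>j\<in>{j. j < n \<and> odd j}. real (if MM n (tau n j) < CC n (1 / (a + 1)) then 2 else 0))"
      using Zu0 by (simp add: of_nat_sum)
    also have "\<dots> = (\<Sum>j\<in>{j. j < n \<and> odd j}. 2 * e j)"
    proof (rule sum.cong)
      fix j assume "j \<in> {j. j < n \<and> odd j}"
      then have j: "j < n" "odd j" by auto
      show "real (if MM n (tau n j) < CC n (1 / (a + 1)) then 2 else 0) = 2 * e j"
        using ltMM[OF j] by (auto simp: e_def)
    qed simp
    finally show "real (card Zu) = (\<Sum>j\<in>{j. j < n \<and> odd j}. 2 * e j)" .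
  qed
  have Zl: "finite Zl" "card Zl = card Zu"
  proof -
    have "Zl = cnj ` Zu" unfolding Zl_def Zu_def by (rule Zl_eq)
    moreover have "inj_on cnj Zu" by (rule inj_onI) simp
    ultimately show "finite Zl" "card Zl = card Zu" using Zu by (auto simp: card_image)
  qed
  have cardZ: "card Z = card Zp + card Zn + card Zu + card Zl"
  proof -
    have d1: "Zp \<inter> Zn = {}" "(Zp \<union> Zn) \<inter> Zu = {}" "(Zp \<union> Zn \<union> Zu) \<inter> Zl = {}"
      unfolding Zp_def Zn_def Zu_def Zl_def by auto
    show ?thesis unfolding Zsplit
      using Zp Zn Zu Zl d1 by (simp add: card_Un_disjoint)
  qed
  have R: "real (card Z) = 1 + (if odd n then 2 * e n else 0) + 2 * (\<Sum>j\<in>{j. j < n \<and> odd j}. 2 * e j)"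
    using cardZ Zp Zn Zu Zl by simp
  have R2: "real (card Z) = 2 * (real n - (\<Sum>j<n. (-1)^(j+1) * (e (Suc j) - e j))) + 1"
    unfolding R S by (simp add: sum_distrib_left)
  have "of_nat (card Z) = (of_real (real (card Z)) :: complex)" by simp
  also have "\<dots> = of_real (2 * (real n - (\<Sum>j<n. (-1)^(j+1) * (e (Suc j) - e j))) + 1)" unfolding R2 ..
  also have "\<dots> = 2 * (of_nat n - winding_number (f_a n a \<circ> circlepath 0 1) 0) + 1"
    unfolding W by simp
  finally show ?thesis unfolding Z_def .
qed


end
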